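(* Let $H=(E,\{X_i : i\in[n]\})$ be a hypergraph and let $t_1,\dots,t_n$ be integers with $0\le t_i\le |X_i|$, such that: (H2) $|X_i\cap X_j|\le 1$ for all distinct $i,j\in[n]$; (H3) there are no $a,b,c\in E$ such that $\{a,b\},\{a,c\},\{b,c\}$ are all hyperedges of $H$; (T) for each $i\in[n]$, either $t_i=1$ or $\min\{w(e) : e\in X_i\}\le t_i<|X_i|$. Let $\rho$ be the polymatroid on $E$ given by $\rho(A)=\sum_{i=1}^n\min\{|A\cap X_i|,t_i\}$ for $A\subseteq E$ (equivalently $\rho=\sum_{i=1}^n r_{M_i}$ with $M_i=U_{t_i,X_i}\oplus U_{0,E-X_i}$). Then for each positive integer $k$ there is a bijection from the set of proper $k$-colorings $c:[n]\to[k]$ of the line graph $G_H$ onto $\Delta_\rho^k$. Consequently, the least $k$ with $\rho\in\mathcal{D}_k$ is $k=\chi(G_H)$, and $|\Delta_\rho^k|=\chi(G_H;k)$ for every positive integer $k$.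
   Context: A polymatroid on a finite set $E$ is a function $\rho:2^E\to\mathbb{Z}$ that is normalized ($\rho(\emptyset)=0$), non-decreasing, and submodular. A hypergraph is a pair $H=(E,\mathcal{E})$ where $E$ is a finite set and $\mathcal{E}=\{X_i:i\in[n]\}$ is a set of nonempty subsets of $E$ (the hyperedges), $[n]=\{1,\dots,n\}$. For $e\in E$, $w(e)$ is the number of hyperedges containing $e$. The line graph $G_H$ has vertex set $[n]$, with $ij$ an edge iff $i\ne j$ and $X_i\cap X_j\ne\emptyset$. $U_{r,X}$ is the rank-$r$ uniform matroid on $X$ (bases are the $r$-subsets of $X$). For a polymatroid $\rho$ on $E$ and positive integer $k$, $\Delta_\rho^k$ is the set of $k$-tuples $(N_1,\dots,N_k)$ of matroids on $E$ with $\rho=r_{N_1}+\cdots+r_{N_k}$ (pointwise sum of rank functions). $\mathcal{D}_k$ is the class of polymatroids $\rho$ for which $\Delta_\rho^k\neq\emptyset$ ($k$-decomposable polymatroids). $\chi(G_H)$ and $\chi(G_H;k)$ are the chromatic number and chromatic polynomial of $G_H$. *)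

theory Defs
  imports Main "HOL-Library.FuncSet"
begin

definition hypergraph :: "'a set \<Rightarrow> nat \<Rightarrow> (nat \<Rightarrow> 'a set) \<Rightarrow> bool" where
  "hypergraph E n X \<longleftrightarrow> finite E \<and> inj_on X {1..n} \<and>
     (\<forall>i\<in>{1..n}. X i \<noteq> {} \<and> X i \<subseteq> E)"

definition hyperedges :: "nat \<Rightarrow> (nat \<Rightarrow> 'a set) \<Rightarrow> 'a set set" where
  "hyperedges n X = X ` {1..n}"

definition hweight :: "nat \<Rightarrow> (nat \<Rightarrow> 'a set) \<Rightarrow> 'a \<Rightarrow> nat" where
  "hweight n X e = card {i\<in>{1..n}. e \<in> X i}"

definition line_adj :: "(nat \<Rightarrow> 'a set) \<Rightarrow> nat \<Rightarrow> nat \<Rightarrow> bool" where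
  "line_adj X i j \<longleftrightarrow> i \<noteq> j \<and> X i \<inter> X j \<noteq> {}"

definition proper_colorings :: "nat \<Rightarrow> (nat \<Rightarrow> 'a set) \<Rightarrow> nat \<Rightarrow> (nat \<Rightarrow> nat) set" where
  "proper_colorings n X k = {c \<in> {1..n} \<rightarrow>\<^sub>E {1..k}.
      \<forall>i\<in>{1..n}. \<forall>j\<in>{1..n}. line_adj X i j \<longrightarrow> c i \<noteq> c j}"

definition chromatic_number :: "nat \<Rightarrow> (nat \<Rightarrow> 'a set) \<Rightarrow> nat" where
  "chromatic_number n X = (LEAST k. proper_colorings n X k \<noteq> {})"

definition chromatic_poly :: "nat \<Rightarrow> (nat \<Rightarrow> 'a set) \<Rightarrow> nat \<Rightarrow> nat" where
  "chromatic_poly n X k = card (proper_colorings n X k)"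

definition polymatroid :: "'a set \<Rightarrow> ('a set \<Rightarrow> int) \<Rightarrow> bool" where
  "polymatroid E r \<longleftrightarrow> r {} = 0 \<and>
     (\<forall>A B. A \<subseteq> B \<and> B \<subseteq> E \<longrightarrow> r A \<le> r B) \<and>
     (\<forall>A B. A \<subseteq> E \<and> B \<subseteq> E \<longrightarrow> r (A \<union> B) + r (A \<inter> B) \<le> r A + r B)"

text \<open>A matroid on E, represented by its rank function on 2^E (rank axioms);
  values outside 2^E are fixed to 0 so that a matroid is a unique object.\<close>
definition matroid_rank :: "'a set \<Rightarrow> ('a set \<Rightarrow> int) \<Rightarrow> bool" where
  "matroid_rank E r \<longleftrightarrow>
     (\<forall>A. A \<subseteq> E \<longrightarrow> 0 \<le> r A \<and> r A \<le> int (card A)) \<and>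
     (\<forall>A B. A \<subseteq> B \<and> B \<subseteq> E \<longrightarrow> r A \<le> r B) \<and>
     (\<forall>A B. A \<subseteq> E \<and> B \<subseteq> E \<longrightarrow> r (A \<union> B) + r (A \<inter> B) \<le> r A + r B) \<and>
     (\<forall>A. \<not> A \<subseteq> E \<longrightarrow> r A = 0)"

definition Delta :: "'a set \<Rightarrow> ('a set \<Rightarrow> int) \<Rightarrow> nat \<Rightarrow> ('a set \<Rightarrow> int) list set" where
  "Delta E \<rho> k = {Ns. length Ns = k \<and> (\<forall>N\<in>set Ns. matroid_rank E N) \<and>
      (\<forall>A. A \<subseteq> E \<longrightarrow> \<rho> A = (\<Sum>N\<leftarrow>Ns. N A))}"

definition decomposable :: "'a set \<Rightarrow> nat \<Rightarrow> ('a set \<Rightarrow> int) \<Rightarrow> bool" where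
  "decomposable E k \<rho> \<longleftrightarrow> Delta E \<rho> k \<noteq> {}"

end

theory Submission
  imports Defs
begin


section \<open>Matroid rank basics\<close>

context
  fixes E :: "'a set" and r :: "'a set \<Rightarrow> int"
  assumes mr: "matroid_rank E r"
begin

lemma mr_nonneg: "A \<subseteq> E \<Longrightarrow> 0 \<le> r A"
  using mr unfolding matroid_rank_def by blast

lemma mr_card: "A \<subseteq> E \<Longrightarrow> r A \<le> int (card A)"
  using mr unfolding matroid_rank_def by blast

lemma mr_mono: "A \<subseteq> B \<Longrightarrow> B \<subseteq> E \<Longrightarrow> r A \<le> r B"
  using mr unfolding matroid_rank_def by blast

lemma mr_submod: "A \<subseteq> E \<Longrightarrow> B \<subseteq> E \<Longrightarrow> r (A \<union> B) + r (A \<inter> B) \<le> r A + r B"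
  using mr unfolding matroid_rank_def by blast

lemma mr_out: "\<not> A \<subseteq> E \<Longrightarrow> r A = 0"
  using mr unfolding matroid_rank_def by blast

lemma mr_empty: "r {} = 0"
  using mr_nonneg[of "{}"] mr_card[of "{}"] by simp

lemma mr_single: "x \<in> E \<Longrightarrow> r {x} = 0 \<or> r {x} = 1"
  using mr_nonneg[of "{x}"] mr_card[of "{x}"] by auto

lemma mr_union_le: "A \<subseteq> E \<Longrightarrow> B \<subseteq> E \<Longrightarrow> r (A \<union> B) \<le> r A + r B"
proof -
  assume a: "A \<subseteq> E" "B \<subseteq> E"
  then have "0 \<le> r (A \<inter> B)" by (intro mr_nonneg) auto
  then show ?thesis using mr_submod[OF a] by linarith
qed

lemma mr_insert_le: "A \<subseteq> E \<Longrightarrow> x \<in> E \<Longrightarrow> r (insert x A) \<le> r A + r {x}"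
  using mr_union_le[of "{x}" A] by simp

lemma mr_insert_le1: "A \<subseteq> E \<Longrightarrow> x \<in> E \<Longrightarrow> r (insert x A) \<le> r A + 1"
  using mr_insert_le[of A x] mr_single[of x] by auto

lemma mr_closure_step:
  assumes "A \<subseteq> E" "B \<subseteq> E" "A \<subseteq> B" "x \<in> E" "r (insert x A) = r A"
  shows "r (insert x B) = r B"
proof -
  have "B \<union> insert x A = insert x B" using assms by auto
  moreover have "r (B \<union> insert x A) + r (B \<inter> insert x A) \<le> r B + r (insert x A)"
    using mr_submod[of B "insert x A"] assms by auto
  ultimately have 1: "r (insert x B) + r (B \<inter> insert x A) \<le> r B + r (insert x A)" by simp
  moreover have "r A \<le> r (B \<inter> insert x A)" using assms by (intro mr_mono) auto
  moreover have "r B \<le> r (insert x B)" using assms by (intro mr_mono) auto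
  ultimately show ?thesis using assms(5) by linarith
qed

lemma mr_closure_set:
  assumes "finite B" "A \<subseteq> E" "B \<subseteq> E" "\<forall>x\<in>B. r (insert x A) = r A"
  shows "r (A \<union> B) = r A"
  using assms
proof (induction B rule: finite_induct)
  case empty then show ?case by simp
next
  case (insert y F)
  have "r (A \<union> F) = r A" using insert by auto
  have "r (insert y (A \<union> F)) = r (A \<union> F)"
    using mr_closure_step[of A "A \<union> F" y] insert by auto
  then show ?case using \<open>r (A \<union> F) = r A\<close> by simp
qed

lemma mr_nonloop_part:
  assumes "A \<subseteq> E" "finite A"
  shows "r A = r (A \<inter> {x\<in>E. r {x} = 1})"
proof -
  let ?L = "A - {x\<in>E. r {x} = 1}"
  have "r ((A \<inter> {x\<in>E. r {x} = 1}) \<union> ?L) = r (A \<inter> {x\<in>E. r {x} = 1})"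
  proof (rule mr_closure_set)
    show "finite ?L" using assms by auto
    show "A \<inter> {x \<in> E. r {x} = 1} \<subseteq> E" "?L \<subseteq> E" using assms by auto
    show "\<forall>x\<in>?L. r (insert x (A \<inter> {x \<in> E. r {x} = 1})) = r (A \<inter> {x \<in> E. r {x} = 1})"
    proof
      fix x assume x: "x \<in> ?L"
      then have "r {x} = 0" using mr_single[of x] assms by auto
      have xE: "x \<in> E" using x assms by auto
      have "r (insert x (A \<inter> {x \<in> E. r {x} = 1})) \<le> r (A \<inter> {x \<in> E. r {x} = 1}) + r {x}"
        using mr_insert_le[of "A \<inter> {x \<in> E. r {x} = 1}" x] xE assms by auto
      moreover have "r (A \<inter> {x \<in> E. r {x} = 1}) \<le> r (insert x (A \<inter> {x \<in> E. r {x} = 1}))"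
        using xE assms by (intro mr_mono) auto
      ultimately show "r (insert x (A \<inter> {x \<in> E. r {x} = 1})) = r (A \<inter> {x \<in> E. r {x} = 1})"
        using \<open>r {x} = 0\<close> by linarith
    qed
  qed
  moreover have "(A \<inter> {x\<in>E. r {x} = 1}) \<union> ?L = A" by auto
  ultimately show ?thesis by simp
qed

lemma mr_UN_le:
  assumes "finite F" "\<forall>i\<in>F. B i \<subseteq> E"
  shows "r (\<Union>i\<in>F. B i) \<le> (\<Sum>i\<in>F. r (B i))"
  using assms
proof (induction F rule: finite_induct)
  case empty then show ?case using mr_empty by simp
next
  case (insert i F)
  have "r (\<Union>j\<in>insert i F. B j) = r (B i \<union> (\<Union>j\<in>F. B j))" by simp
  also have "\<dots> \<le> r (B i) + r (\<Union>j\<in>F. B j)"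
    using insert by (intro mr_union_le) auto
  also have "\<dots> \<le> r (B i) + (\<Sum>j\<in>F. r (B j))" using insert by auto
  finally show ?case using insert by simp
qed

end



locale hyp =
  fixes E :: "'a set" and n :: nat and X :: "nat \<Rightarrow> 'a set" and t :: "nat \<Rightarrow> nat"
  assumes hyp: "hypergraph E n X"
    and t_le: "\<forall>i\<in>{1..n}. t i \<le> card (X i)"
    and H2: "\<forall>i\<in>{1..n}. \<forall>j\<in>{1..n}. i \<noteq> j \<longrightarrow> card (X i \<inter> X j) \<le> 1"
    and H3: "\<not> (\<exists>a\<in>E. \<exists>b\<in>E. \<exists>c\<in>E. a \<noteq> b \<and> a \<noteq> c \<and> b \<noteq> c \<and>
               {a, b} \<in> hyperedges n X \<and> {a, c} \<in> hyperedges n X \<and> {b, c} \<in> hyperedges n X)"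
    and T: "\<forall>i\<in>{1..n}. t i = 1 \<or>
               (Min (hweight n X ` X i) \<le> t i \<and> t i < card (X i))"
begin

abbreviation "I \<equiv> {1..n}"

lemma finE: "finite E" using hyp unfolding hypergraph_def by blast
lemma XE: "i \<in> I \<Longrightarrow> X i \<subseteq> E" using hyp unfolding hypergraph_def by blast
lemma Xne: "i \<in> I \<Longrightarrow> X i \<noteq> {}" using hyp unfolding hypergraph_def by blast
lemma finX: "i \<in> I \<Longrightarrow> finite (X i)" using XE finE finite_subset by blast
lemma injX: "inj_on X I" using hyp unfolding hypergraph_def by blast
lemma cardX: "i \<in> I \<Longrightarrow> 1 \<le> card (X i)"
  using Xne finX by (simp add: Suc_le_eq card_gt_0_iff)

lemma t_pos: assumes i: "i \<in> I" shows "1 \<le> t i"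
proof -
  have "t i = 1 \<or> Min (hweight n X ` X i) \<le> t i" using T i by blast
  moreover have "1 \<le> Min (hweight n X ` X i)"
  proof -
    have fin: "finite (hweight n X ` X i)" using finX i by blast
    have ne: "hweight n X ` X i \<noteq> {}" using Xne i by blast
    have "\<forall>v\<in>hweight n X ` X i. 1 \<le> v"
    proof
      fix v assume "v \<in> hweight n X ` X i"
      then obtain e where e: "e \<in> X i" "v = hweight n X e" by blast
      have "i \<in> {l\<in>{1..n}. e \<in> X l}" using e i by auto
      then have "{l\<in>{1..n}. e \<in> X l} \<noteq> {}" by blast
      then show "1 \<le> v" using e unfolding hweight_def by (simp add: Suc_le_eq card_gt_0_iff)
    qed
    then show ?thesis using fin ne by simp
  qed
  ultimately show ?thesis by linarith
qed

lemma t_lt: assumes "i \<in> I" "2 \<le> card (X i)" shows "t i < card (X i)"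
proof -
  have "t i = 1 \<or> t i < card (X i)" using T assms(1) by blast
  then show ?thesis using assms(2) by linarith
qed

lemma t_single: assumes "i \<in> I" "card (X i) < 2" shows "t i = 1"
proof -
  have "t i \<le> card (X i)" using t_le assms(1) by blast
  then show ?thesis using t_pos[OF assms(1)] assms(2) by linarith
qed

lemma H2': "i \<in> I \<Longrightarrow> j \<in> I \<Longrightarrow> i \<noteq> j \<Longrightarrow> card (X i \<inter> X j) \<le> 1"
  using H2 by blast

lemma two_in:
  assumes "i \<in> I" "j \<in> I" "x \<in> X i" "x \<in> X j" "y \<in> X i" "y \<in> X j" "x \<noteq> y"
  shows "i = j"
proof (rule ccontr)
  assume "i \<noteq> j"
  then have "card (X i \<inter> X j) \<le> 1" using H2' assms by blast
  moreover have "{x, y} \<subseteq> X i \<inter> X j" using assms by auto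
  moreover have "finite (X i \<inter> X j)" using finX assms by blast
  ultimately have "card {x, y} \<le> 1" using card_mono[of "X i \<inter> X j" "{x, y}"] by linarith
  then show False using assms(7) by simp
qed

lemma meet_le1:
  assumes "i \<in> I" "j \<in> I" "i \<noteq> j" "x \<in> X i" "x \<in> X j"
  shows "X i \<inter> X j = {x}"
proof (intro equalityI subsetI)
  fix y assume "y \<in> X i \<inter> X j"
  then show "y \<in> {x}" using two_in[of i j x y] assms by (cases "y = x") auto
qed (use assms in auto)

definition w :: "'a \<Rightarrow> nat" where "w x = card {i\<in>I. x \<in> X i}"
definition rho :: "'a set \<Rightarrow> int" where
  "rho A = (\<Sum>i\<in>I. int (min (card (A \<inter> X i)) (t i)))"
definition dl :: "'a set \<Rightarrow> int" where
  "dl A = (\<Sum>i\<in>I. int (card (A \<inter> X i) - min (card (A \<inter> X i)) (t i)))"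

lemma rho_single: assumes "x \<in> E" shows "rho {x} = int (w x)"
proof -
  have "rho {x} = (\<Sum>i\<in>I. of_bool (x \<in> X i))"
    unfolding rho_def
  proof (rule sum.cong)
    fix i assume i: "i \<in> I"
    show "int (min (card ({x} \<inter> X i)) (t i)) = of_bool (x \<in> X i)"
      using t_pos[OF i] by auto
  qed simp
  also have "\<dots> = int (card (I \<inter> {i. x \<in> X i}))" by simp
  moreover have "{i\<in>I. x \<in> X i} = I \<inter> {i. x \<in> X i}" by blast
  ultimately show ?thesis unfolding w_def by simp
qed

lemma dl_nonneg: "0 \<le> dl A" unfolding dl_def by (intro sum_nonneg) auto

lemma dl_edge:
  assumes i: "i \<in> I" and A: "A \<subseteq> X i"
  shows "dl A = int (card A) - int (min (card A) (t i))"
proof -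
  have "dl A = (\<Sum>l\<in>I. if l = i then int (card A - min (card A) (t i)) else 0)"
    unfolding dl_def
  proof (rule sum.cong)
    fix l assume l: "l \<in> I"
    show "int (card (A \<inter> X l) - min (card (A \<inter> X l)) (t l)) =
          (if l = i then int (card A - min (card A) (t i)) else 0)"
    proof (cases "l = i")
      case True then show ?thesis using A by (simp add: Int_absorb2)
    next
      case False
      have "card (A \<inter> X l) \<le> card (X i \<inter> X l)"
        using A finX[OF i] by (intro card_mono) auto
      also have "\<dots> \<le> 1" using H2' i l False by blast
      finally have "card (A \<inter> X l) \<le> t l" using t_pos[OF l] by linarith
      then show ?thesis using False by simp
    qed
  qed simp
  also have "\<dots> = int (card A - min (card A) (t i))" using i by simp
  finally show ?thesis by simp
qed

lemma sum_w:
  assumes A: "A \<subseteq> E"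
  shows "(\<Sum>x\<in>A. int (w x)) = (\<Sum>i\<in>I. int (card (A \<inter> X i)))"
proof -
  have finA: "finite A" using A finE finite_subset by blast
  have "(\<Sum>x\<in>A. int (w x)) = (\<Sum>x\<in>A. \<Sum>i\<in>I. (of_bool (x \<in> X i) :: int))"
  proof (rule sum.cong)
    fix x assume "x \<in> A"
    have "{i\<in>I. x \<in> X i} = I \<inter> {i. x \<in> X i}" by blast
    then show "int (w x) = (\<Sum>i\<in>I. (of_bool (x \<in> X i) :: int))" unfolding w_def by simp
  qed simp
  also have "\<dots> = (\<Sum>i\<in>I. \<Sum>x\<in>A. (of_bool (x \<in> X i) :: int))" by (rule sum.swap)
  also have "\<dots> = (\<Sum>i\<in>I. int (card (A \<inter> X i)))"
  proof (rule sum.cong)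
    fix i assume "i \<in> I"
    have "A \<inter> {x. x \<in> X i} = A \<inter> X i" by blast
    then show "(\<Sum>x\<in>A. (of_bool (x \<in> X i) :: int)) = int (card (A \<inter> X i))" using finA by simp
  qed simp
  finally show ?thesis .
qed

end



lemma card_split:
  assumes "finite S"
  shows "card {s\<in>S. P s} = card {s\<in>S. P s \<and> Q s} + card {s\<in>S. P s \<and> \<not> Q s}"
proof -
  have "{s\<in>S. P s} = {s\<in>S. P s \<and> Q s} \<union> {s\<in>S. P s \<and> \<not> Q s}" by blast
  moreover have "card ({s\<in>S. P s \<and> Q s} \<union> {s\<in>S. P s \<and> \<not> Q s}) =
      card {s\<in>S. P s \<and> Q s} + card {s\<in>S. P s \<and> \<not> Q s}"
    using assms by (intro card_Un_disjoint) auto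
  ultimately show ?thesis by simp
qed

locale decomp = hyp +
  fixes k :: nat and N :: "nat \<Rightarrow> 'a set \<Rightarrow> int"
  assumes mat: "j \<in> {1..k} \<Longrightarrow> matroid_rank E (N j)"
    and dec: "A \<subseteq> E \<Longrightarrow> rho A = (\<Sum>j\<in>{1..k}. N j A)"
begin

abbreviation "J \<equiv> {1..k}"

definition NL :: "nat \<Rightarrow> 'a set" where "NL j = {x\<in>E. N j {x} = 1}"
definition D :: "nat \<Rightarrow> 'a set \<Rightarrow> int" where "D j A = int (card (A \<inter> NL j)) - N j A"

lemma NL_E: "NL j \<subseteq> E" unfolding NL_def by blast
lemma finA: "A \<subseteq> E \<Longrightarrow> finite A" using finE finite_subset by blast

lemma N_nonneg: "j \<in> J \<Longrightarrow> A \<subseteq> E \<Longrightarrow> 0 \<le> N j A" using mr_nonneg[OF mat] by blast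
lemma N_card: "j \<in> J \<Longrightarrow> A \<subseteq> E \<Longrightarrow> N j A \<le> int (card A)" using mr_card[OF mat] by blast
lemma N_mono: "j \<in> J \<Longrightarrow> A \<subseteq> B \<Longrightarrow> B \<subseteq> E \<Longrightarrow> N j A \<le> N j B" using mr_mono[OF mat] by blast
lemma N_submod: "j \<in> J \<Longrightarrow> A \<subseteq> E \<Longrightarrow> B \<subseteq> E \<Longrightarrow> N j (A \<union> B) + N j (A \<inter> B) \<le> N j A + N j B"
  using mr_submod[OF mat] by blast
lemma N_union_le: "j \<in> J \<Longrightarrow> A \<subseteq> E \<Longrightarrow> B \<subseteq> E \<Longrightarrow> N j (A \<union> B) \<le> N j A + N j B"
  using mr_union_le[OF mat] by blast
lemma N_empty: "j \<in> J \<Longrightarrow> N j {} = 0" using mr_empty[OF mat] by blast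

lemma N_single: "j \<in> J \<Longrightarrow> x \<in> E \<Longrightarrow> N j {x} = of_bool (x \<in> NL j)"
  using mr_single[OF mat, of j x] unfolding NL_def by auto

lemma N_NL: "j \<in> J \<Longrightarrow> A \<subseteq> E \<Longrightarrow> N j A = N j (A \<inter> NL j)"
  using mr_nonloop_part[OF mat, of j A] finA unfolding NL_def by blast

lemma D_nonneg: assumes "j \<in> J" "A \<subseteq> E" shows "0 \<le> D j A"
proof -
  have "N j A = N j (A \<inter> NL j)" using N_NL assms by blast
  also have "\<dots> \<le> int (card (A \<inter> NL j))" using N_card assms by blast
  finally show ?thesis unfolding D_def by simp
qed

lemma D_mono: assumes j: "j \<in> J" and AB: "A \<subseteq> B" and B: "B \<subseteq> E" shows "D j A \<le> D j B"
proof -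
  have A: "A \<subseteq> E" using AB B by blast
  have eq: "B \<inter> NL j = (A \<inter> NL j) \<union> ((B - A) \<inter> NL j)" using AB by blast
  have "N j B = N j (B \<inter> NL j)" using N_NL j B by blast
  also have "\<dots> \<le> N j (A \<inter> NL j) + N j ((B - A) \<inter> NL j)"
    unfolding eq using j B AB by (intro N_union_le) auto
  also have "\<dots> \<le> N j A + int (card ((B - A) \<inter> NL j))"
    using N_NL[OF j A] N_card[OF j, of "(B - A) \<inter> NL j"] B by auto
  finally have 1: "N j B \<le> N j A + int (card ((B - A) \<inter> NL j))" .
  have "card (B \<inter> NL j) = card (A \<inter> NL j) + card ((B - A) \<inter> NL j)"
    unfolding eq using finA[OF A] finA[OF B] by (intro card_Un_disjoint) auto
  then show ?thesis using 1 unfolding D_def by simp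
qed

lemma D_super: assumes j: "j \<in> J" and A: "A \<subseteq> E" and B: "B \<subseteq> E"
  shows "D j A + D j B \<le> D j (A \<union> B) + D j (A \<inter> B)"
proof -
  have "card ((A \<inter> NL j) \<union> (B \<inter> NL j)) + card ((A \<inter> NL j) \<inter> (B \<inter> NL j)) =
        card (A \<inter> NL j) + card (B \<inter> NL j)"
    using card_Un_Int[of "A \<inter> NL j" "B \<inter> NL j"] finA[OF A] finA[OF B] by auto
  moreover have "(A \<inter> NL j) \<union> (B \<inter> NL j) = (A \<union> B) \<inter> NL j" by blast
  moreover have "(A \<inter> NL j) \<inter> (B \<inter> NL j) = (A \<inter> B) \<inter> NL j" by blast
  ultimately have "card ((A \<union> B) \<inter> NL j) + card ((A \<inter> B) \<inter> NL j) = card (A \<inter> NL j) + card (B \<inter> NL j)"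
    by simp
  then show ?thesis using N_submod[OF j A B] unfolding D_def by linarith
qed

lemma N_diff:
  assumes j: "j \<in> J" and A: "A \<subseteq> E"
  shows "N j (A - {x}) \<le> N j A \<and> N j A \<le> N j (A - {x}) + of_bool (x \<in> NL j)"
proof (cases "x \<in> A")
  case True
  have "N j A = N j ((A - {x}) \<union> {x})" using True by (simp add: insert_absorb)
  also have "\<dots> \<le> N j (A - {x}) + N j {x}" using A True j by (intro N_union_le) auto
  finally show ?thesis using N_single[OF j, of x] True A N_mono[OF j, of "A - {x}" A] by auto
next
  case False then show ?thesis by simp
qed

lemma D_loop: assumes j: "j \<in> J" and A: "A \<subseteq> E" and x: "x \<notin> NL j"
  shows "D j (A - {x}) = D j A"
proof -
  have "N j (A - {x}) = N j A" using N_diff[OF j A, of x] x by simp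
  moreover have "(A - {x}) \<inter> NL j = A \<inter> NL j" using x by blast
  ultimately show ?thesis unfolding D_def by simp
qed

lemma D_diff: assumes j: "j \<in> J" and A: "A \<subseteq> E" and x: "x \<in> A" "x \<in> NL j"
  shows "D j A = D j (A - {x}) + 1 - (N j A - N j (A - {x}))"
proof -
  have "A \<inter> NL j = insert x ((A - {x}) \<inter> NL j)" using x by blast
  then have "card (A \<inter> NL j) = card ((A - {x}) \<inter> NL j) + 1"
    using finA[OF A] by simp
  then show ?thesis unfolding D_def by simp
qed

lemma D_empty: "j \<in> J \<Longrightarrow> D j {} = 0" unfolding D_def using N_empty by simp

lemma card_S: assumes x: "x \<in> E" shows "card {j\<in>J. x \<in> NL j} = w x"
proof -
  have "int (w x) = rho {x}" using rho_single x by simp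
  also have "\<dots> = (\<Sum>j\<in>J. N j {x})" using dec x by simp
  also have "\<dots> = (\<Sum>j\<in>J. of_bool (x \<in> NL j))" using N_single x by simp
  also have "\<dots> = int (card (J \<inter> {j. x \<in> NL j}))" by simp
  also have "J \<inter> {j. x \<in> NL j} = {j\<in>J. x \<in> NL j}" by blast
  finally show ?thesis by simp
qed

lemma sum_D: assumes A: "A \<subseteq> E" shows "(\<Sum>j\<in>J. D j A) = dl A"
proof -
  have finA': "finite A" using finA A by blast
  have "(\<Sum>j\<in>J. int (card (A \<inter> NL j))) = (\<Sum>j\<in>J. \<Sum>x\<in>A. (of_bool (x \<in> NL j) :: int))"
  proof (rule sum.cong)
    fix j assume "j \<in> J"
    have "A \<inter> {x. x \<in> NL j} = A \<inter> NL j" by blast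
    then show "int (card (A \<inter> NL j)) = (\<Sum>x\<in>A. (of_bool (x \<in> NL j) :: int))" using finA' by simp
  qed simp
  also have "\<dots> = (\<Sum>x\<in>A. \<Sum>j\<in>J. (of_bool (x \<in> NL j) :: int))" by (rule sum.swap)
  also have "\<dots> = (\<Sum>x\<in>A. int (w x))"
  proof (rule sum.cong)
    fix x assume x: "x \<in> A"
    have "J \<inter> {j. x \<in> NL j} = {j\<in>J. x \<in> NL j}" by blast
    then show "(\<Sum>j\<in>J. (of_bool (x \<in> NL j) :: int)) = int (w x)" using card_S[of x] x A by auto
  qed simp
  also have "\<dots> = (\<Sum>i\<in>I. int (card (A \<inter> X i)))" using sum_w A by blast
  finally have 1: "(\<Sum>j\<in>J. int (card (A \<inter> NL j))) = (\<Sum>i\<in>I. int (card (A \<inter> X i)))" .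
  have "dl A = (\<Sum>i\<in>I. int (card (A \<inter> X i)) - int (min (card (A \<inter> X i)) (t i)))"
    unfolding dl_def by (intro sum.cong) (auto simp: of_nat_diff)
  also have "\<dots> = (\<Sum>i\<in>I. int (card (A \<inter> X i))) - rho A"
    unfolding rho_def by (simp add: sum_subtractf)
  finally have 2: "dl A = (\<Sum>i\<in>I. int (card (A \<inter> X i))) - rho A" .
  have "(\<Sum>j\<in>J. D j A) = (\<Sum>j\<in>J. int (card (A \<inter> NL j))) - (\<Sum>j\<in>J. N j A)"
    unfolding D_def by (simp add: sum_subtractf)
  then show ?thesis using 1 2 dec[OF A] by simp
qed

lemma D_le_dl: assumes j: "j \<in> J" and A: "A \<subseteq> E" shows "D j A \<le> dl A"
proof -
  have "D j A \<le> (\<Sum>c\<in>J. D c A)"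
    using j D_nonneg A by (intro member_le_sum) auto
  then show ?thesis using sum_D A by simp
qed


lemma rho_diff:
  assumes A: "A \<subseteq> E" and x: "x \<in> A"
  shows "rho A - rho (A - {x}) = int (card {i\<in>I. x \<in> X i \<and> card (A \<inter> X i) \<le> t i})"
proof -
  have "rho A - rho (A - {x}) = (\<Sum>i\<in>I. int (min (card (A \<inter> X i)) (t i)) - int (min (card ((A - {x}) \<inter> X i)) (t i)))"
    unfolding rho_def by (simp add: sum_subtractf)
  also have "\<dots> = (\<Sum>i\<in>I. of_bool (x \<in> X i \<and> card (A \<inter> X i) \<le> t i))"
  proof (rule sum.cong)
    fix i assume i: "i \<in> I"
    show "int (min (card (A \<inter> X i)) (t i)) - int (min (card ((A - {x}) \<inter> X i)) (t i)) =
          of_bool (x \<in> X i \<and> card (A \<inter> X i) \<le> t i)"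
    proof (cases "x \<in> X i")
      case True
      have "(A - {x}) \<inter> X i = (A \<inter> X i) - {x}" by blast
      moreover have "x \<in> A \<inter> X i" using True x by blast
      moreover have "finite (A \<inter> X i)" using finX[OF i] by blast
      ultimately have c: "card ((A - {x}) \<inter> X i) = card (A \<inter> X i) - 1" "1 \<le> card (A \<inter> X i)"
        by (auto simp: Suc_le_eq card_gt_0_iff)
      show ?thesis using True c by (cases "card (A \<inter> X i) \<le> t i") auto
    next
      case False
      then have "(A - {x}) \<inter> X i = A \<inter> X i" by blast
      then show ?thesis using False by simp
    qed
  qed simp
  also have "\<dots> = int (card (I \<inter> {i. x \<in> X i \<and> card (A \<inter> X i) \<le> t i}))" by simp
  also have "I \<inter> {i. x \<in> X i \<and> card (A \<inter> X i) \<le> t i} = {i\<in>I. x \<in> X i \<and> card (A \<inter> X i) \<le> t i}" by blast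
  finally show ?thesis .
qed

lemma L6:
  assumes A: "A \<subseteq> E" and x: "x \<in> A"
  shows "card {j\<in>J. x \<in> NL j \<and> N j A = N j (A - {x})} = card {i\<in>I. x \<in> X i \<and> t i < card (A \<inter> X i)}"
proof -
  have xE: "x \<in> E" using A x by blast
  have A': "A - {x} \<subseteq> E" using A by blast
  have "rho A - rho (A - {x}) = (\<Sum>j\<in>J. N j A - N j (A - {x}))"
    using dec[OF A] dec[OF A'] by (simp add: sum_subtractf)
  also have "\<dots> = (\<Sum>j\<in>J. of_bool (x \<in> NL j \<and> N j A \<noteq> N j (A - {x})))"
  proof (rule sum.cong)
    fix j assume j: "j \<in> J"
    show "N j A - N j (A - {x}) = of_bool (x \<in> NL j \<and> N j A \<noteq> N j (A - {x}))"
      using N_diff[OF j A, of x] by auto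
  qed simp
  also have "\<dots> = int (card (J \<inter> {j. x \<in> NL j \<and> N j A \<noteq> N j (A - {x})}))" by simp
  also have "J \<inter> {j. x \<in> NL j \<and> N j A \<noteq> N j (A - {x})} = {j\<in>J. x \<in> NL j \<and> N j A \<noteq> N j (A - {x})}" by blast
  finally have 1: "card {j\<in>J. x \<in> NL j \<and> N j A \<noteq> N j (A - {x})} = card {i\<in>I. x \<in> X i \<and> card (A \<inter> X i) \<le> t i}"
    using rho_diff[OF A x] by simp
  have 2: "card {j\<in>J. x \<in> NL j} = card {j\<in>J. x \<in> NL j \<and> N j A = N j (A - {x})} + card {j\<in>J. x \<in> NL j \<and> N j A \<noteq> N j (A - {x})}"
    by (rule card_split) simp
  have 3: "card {i\<in>I. x \<in> X i} = card {i\<in>I. x \<in> X i \<and> card (A \<inter> X i) \<le> t i} + card {i\<in>I. x \<in> X i \<and> \<not> card (A \<inter> X i) \<le> t i}"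
    by (rule card_split) simp
  have "{i\<in>I. x \<in> X i \<and> \<not> card (A \<inter> X i) \<le> t i} = {i\<in>I. x \<in> X i \<and> t i < card (A \<inter> X i)}" by auto
  then show ?thesis using 1 2 3 card_S[OF xE] unfolding w_def by simp
qed

definition circ :: "nat \<Rightarrow> 'a set \<Rightarrow> bool" where
  "circ j C \<longleftrightarrow> C \<subseteq> E \<and> 0 < D j C \<and> (\<forall>B. B \<subset> C \<longrightarrow> D j B = 0)"

lemma circ_exists:
  assumes j: "j \<in> J" shows "A \<subseteq> E \<Longrightarrow> 0 < D j A \<Longrightarrow> \<exists>C\<subseteq>A. circ j C"
proof (induction "card A" arbitrary: A rule: less_induct)
  case less
  show ?case
  proof (cases "\<forall>B. B \<subset> A \<longrightarrow> D j B = 0")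
    case True
    then have "circ j A" using less.prems unfolding circ_def by blast
    then show ?thesis by blast
  next
    case False
    then obtain B where B: "B \<subset> A" "D j B \<noteq> 0" by blast
    have BE: "B \<subseteq> E" using B less.prems by blast
    have "0 < D j B" using D_nonneg[OF j BE] B by linarith
    moreover have "card B < card A" using B finA less.prems by (intro psubset_card_mono) auto
    ultimately obtain C where "C \<subseteq> B" "circ j C" using less.hyps BE by blast
    then show ?thesis using B by blast
  qed
qed

lemma circ_props:
  assumes j: "j \<in> J" and c: "circ j C"
  shows "C \<subseteq> NL j" "D j C = 1" "finite C" "2 \<le> card C" "C \<subseteq> E"
    "\<And>x. x \<in> C \<Longrightarrow> N j C = N j (C - {x})" "N j C = int (card C) - 1"
proof -
  have CE: "C \<subseteq> E" and pos: "0 < D j C" and min: "\<And>B. B \<subset> C \<Longrightarrow> D j B = 0"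
    using c unfolding circ_def by auto
  show "C \<subseteq> E" by (rule CE)
  show fin: "finite C" using finA CE by blast
  show NLs: "C \<subseteq> NL j"
  proof
    fix x assume x: "x \<in> C"
    show "x \<in> NL j"
    proof (rule ccontr)
      assume "x \<notin> NL j"
      then have "D j (C - {x}) = D j C" using D_loop[OF j CE] by blast
      moreover have "D j (C - {x}) = 0" using min x by blast
      ultimately show False using pos by simp
    qed
  qed
  have ne: "C \<noteq> {}" using pos D_empty[OF j] by auto
  have key: "N j C = N j (C - {x}) \<and> D j C = 1" if x: "x \<in> C" for x
  proof -
    have "D j (C - {x}) = 0" using min x by blast
    moreover have "D j C = D j (C - {x}) + 1 - (N j C - N j (C - {x}))"
      using D_diff[OF j CE x] NLs x by blast
    moreover have "N j (C - {x}) \<le> N j C" "N j C \<le> N j (C - {x}) + 1"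
      using N_diff[OF j CE, of x] NLs x by auto
    ultimately show ?thesis using pos by linarith
  qed
  obtain x0 where x0: "x0 \<in> C" using ne by blast
  show D1: "D j C = 1" using key x0 by blast
  show "\<And>x. x \<in> C \<Longrightarrow> N j C = N j (C - {x})" using key by blast
  show "N j C = int (card C) - 1" using D1 NLs unfolding D_def by (simp add: Int_absorb2)
  show "2 \<le> card C"
  proof (rule ccontr)
    assume "\<not> 2 \<le> card C"
    moreover have "card C \<noteq> 0" using ne fin by simp
    ultimately have "card C = 1" by linarith
    then obtain y where "C = {y}" using card_1_singletonE by blast
    then have "D j C = 0" using N_single[OF j, of y] NLs CE unfolding D_def by auto
    then show False using pos by simp
  qed
qed

lemma drop_exists:
  assumes j: "j \<in> J" and T: "T \<subseteq> E" and pos: "0 < D j T"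
  shows "\<exists>y\<in>T. D j (T - {y}) < D j T"
proof -
  obtain U where U: "U \<subseteq> T" "circ j U" using circ_exists[OF j T pos] by blast
  have "2 \<le> card U" using circ_props[OF j U(2)] by blast
  then obtain y where y: "y \<in> U" by fastforce
  have "D j (T - {y}) + D j U \<le> D j ((T - {y}) \<union> U) + D j ((T - {y}) \<inter> U)"
    using D_super[OF j] T U by blast
  moreover have "(T - {y}) \<union> U = T" using U y by blast
  moreover have "(T - {y}) \<inter> U = U - {y}" using U by blast
  moreover have "D j (U - {y}) = 0" using U(2) y unfolding circ_def by blast
  moreover have "D j U = 1" using circ_props[OF j U(2)] by blast
  ultimately show ?thesis using y U by force
qed

lemma circ_through:
  assumes j: "j \<in> J"
  shows "A \<subseteq> E \<Longrightarrow> x \<in> A \<Longrightarrow> x \<in> NL j \<Longrightarrow> N j A = N j (A - {x}) \<Longrightarrow> \<exists>C. circ j C \<and> x \<in> C \<and> C \<subseteq> A"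
proof (induction "card A" arbitrary: A rule: less_induct)
  case less
  note AE = less.prems(1) and xA = less.prems(2) and xNL = less.prems(3) and eq = less.prems(4)
  show ?case
  proof (cases "\<exists>y\<in>A - {x}. N j (A - {y}) = N j (A - {y} - {x})")
    case True
    then obtain y where y: "y \<in> A" "y \<noteq> x" "N j (A - {y}) = N j (A - {y} - {x})" by blast
    have "card (A - {y}) < card A" using y finA[OF AE] by (intro card_Diff1_less)
    then obtain C where "circ j C" "x \<in> C" "C \<subseteq> A - {y}"
      using less.hyps[of "A - {y}"] AE y xA xNL by auto
    then show ?thesis by blast
  next
    case False
    have nd: "N j (A - {y}) = N j (A - {y} - {x}) + 1" if y: "y \<in> A" "y \<noteq> x" for y
    proof -
      have ne: "N j (A - {y}) \<noteq> N j (A - {y} - {x})" using False y by blast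
      have "N j (A - {y} - {x}) \<le> N j (A - {y}) \<and> N j (A - {y}) \<le> N j (A - {y} - {x}) + of_bool (x \<in> NL j)"
        using N_diff[OF j, of "A - {y}" x] AE by blast
      then show ?thesis using ne xNL by auto
    qed
    have D0: "D j (A - {x}) = 0"
    proof (rule ccontr)
      assume "D j (A - {x}) \<noteq> 0"
      then have "0 < D j (A - {x})" using D_nonneg[OF j, of "A - {x}"] AE by force
      then obtain y where y: "y \<in> A - {x}" "D j (A - {x} - {y}) < D j (A - {x})"
        using drop_exists[OF j, of "A - {x}"] AE by blast
      have yNL: "y \<in> NL j" using D_loop[OF j, of "A - {x}" y] y AE by force
      have "D j (A - {x}) = D j (A - {x} - {y}) + 1 - (N j (A - {x}) - N j (A - {x} - {y}))"
        using D_diff[OF j, of "A - {x}" y] y yNL AE by blast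
      moreover have "N j (A - {x} - {y}) \<le> N j (A - {x})" using N_diff[OF j, of "A - {x}" y] AE by blast
      ultimately have e1: "N j (A - {x} - {y}) = N j (A - {x})" using y by linarith
      have e2: "N j (A - {y}) = N j (A - {y} - {x}) + 1" using nd y by blast
      have "A - {x} - {y} = A - {y} - {x}" by blast
      then have "N j (A - {y}) = N j A + 1" using e1 e2 eq by simp
      moreover have "N j (A - {y}) \<le> N j A" using N_diff[OF j AE, of y] by blast
      ultimately show False by simp
    qed
    have DA: "D j A = 1" using D_diff[OF j AE xA xNL] D0 eq by simp
    have "circ j A"
      unfolding circ_def
    proof (intro conjI allI impI)
      show "A \<subseteq> E" by (rule AE)
      show "0 < D j A" using DA by simp
      fix B assume B: "B \<subset> A"
      have BE: "B \<subseteq> E" using B AE by blast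
      show "D j B = 0"
      proof (cases "x \<in> B")
        case False
        then have "D j B \<le> D j (A - {x})" using B AE by (intro D_mono[OF j]) auto
        then show ?thesis using D0 D_nonneg[OF j BE] by linarith
      next
        case True
        obtain y where y: "y \<in> A" "y \<notin> B" using B by blast
        have yx: "y \<noteq> x" using y True by blast
        have NB: "N j B = N j (B - {x}) + 1"
        proof (rule ccontr)
          assume "N j B \<noteq> N j (B - {x}) + 1"
          then have "N j B = N j (B - {x})" using N_diff[OF j BE, of x] xNL by force
          then have "N j (insert x (B - {x})) = N j (B - {x})" using True by (simp add: insert_absorb)
          then have "N j (insert x (A - {y} - {x})) = N j (A - {y} - {x})"
            using mr_closure_step[OF mat[OF j], of "B - {x}" "A - {y} - {x}" x] AE B y xA by blast
          moreover have "insert x (A - {y} - {x}) = A - {y}" using xA yx by blast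
          ultimately show False using nd[OF y(1) yx] by simp
        qed
        have "D j B = D j (B - {x})" using D_diff[OF j BE True xNL] NB by simp
        also have "\<dots> \<le> D j (A - {x})" using B AE by (intro D_mono[OF j]) auto
        finally show ?thesis using D0 D_nonneg[OF j BE] by linarith
      qed
    qed
    then show ?thesis using xA by blast
  qed
qed

end



context decomp begin

definition ns :: "nat \<Rightarrow> bool" where "ns i \<longleftrightarrow> 2 \<le> card (X i)"
definition g :: "nat \<Rightarrow> 'a set \<Rightarrow> int" where "g i A = int (card A) - int (min (card A) (t i))"

lemma sum_D_edge: assumes "i \<in> I" "A \<subseteq> X i" shows "(\<Sum>j\<in>J. D j A) = g i A"
proof -
  have "A \<subseteq> E" using XE assms by blast
  then show ?thesis using sum_D dl_edge assms unfolding g_def by simp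
qed

lemma owner_ex:
  assumes i: "i \<in> I" and nsi: "ns i"
  shows "\<exists>ow\<in>J. X i \<subseteq> NL ow \<and> (\<forall>A\<subseteq>X i. D ow A = g i A) \<and> (\<forall>c\<in>J. c \<noteq> ow \<longrightarrow> (\<forall>A\<subseteq>X i. D c A = 0))"
proof -
  define Y where "Y = X i"
  define s where "s = t i"
  have s1: "1 \<le> s" using t_pos i unfolding s_def by blast
  have sY: "s < card Y" using t_lt i nsi unfolding s_def Y_def ns_def by blast
  have finY: "finite Y" using finX i unfolding Y_def by blast
  have YE: "Y \<subseteq> E" using XE i unfolding Y_def by blast
  have gv: "g i A = int (card A) - int (min (card A) s)" for A unfolding g_def s_def by simp
  have sumg: "(\<Sum>j\<in>J. D j A) = g i A" if "A \<subseteq> Y" for A using sum_D_edge i that unfolding Y_def by blast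
  have Dnn: "0 \<le> D c A" if "c \<in> J" "A \<subseteq> Y" for c A using D_nonneg that YE by blast
  have Dle: "D c A \<le> g i A" if c: "c \<in> J" and A: "A \<subseteq> Y" for c A
  proof -
    have "D c A \<le> (\<Sum>j\<in>J. D j A)" using c Dnn A by (intro member_le_sum) auto
    then show ?thesis using sumg A by simp
  qed
  have modular: "D c (A \<union> B) + D c (A \<inter> B) = D c A + D c B"
    if c: "c \<in> J" and A: "A \<subseteq> Y" and B: "B \<subseteq> Y" and gm: "g i (A \<union> B) + g i (A \<inter> B) = g i A + g i B" for c A B
  proof -
    have "(\<Sum>j\<in>J. D j A + D j B) = (\<Sum>j\<in>J. D j (A \<union> B) + D j (A \<inter> B))"
    proof -
      have "A \<inter> B \<subseteq> Y" "A \<union> B \<subseteq> Y" using A B by auto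
      then show ?thesis
        using sumg[of A] sumg[of B] sumg[of "A \<union> B"] sumg[of "A \<inter> B"] A B gm by (simp add: sum.distrib)
    qed
    then show ?thesis
      using sum_mono_inv[of "\<lambda>j. D j A + D j B" J "\<lambda>j. D j (A \<union> B) + D j (A \<inter> B)" c] D_super A B YE c
      by fastforce
  qed
  have D0: "D c A = 0" if "c \<in> J" "A \<subseteq> Y" "card A \<le> s" for c A
    using Dnn[of c A] Dle[of c A] that gv[of A] by simp
  have adj: "D c P = D c Q"
    if c: "c \<in> J" and P: "P \<subseteq> Y" and Q: "Q \<subseteq> Y" and cP: "card P = s + 1" and cQ: "card Q = s + 1"
      and cPQ: "card (P \<inter> Q) = s" for c P Q
  proof -
    have finP: "finite P" "finite Q" using P Q finY finite_subset by auto
    have "P \<inter> Q \<noteq> {}" using cPQ s1 by auto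
    then obtain r where r: "r \<in> P" "r \<in> Q" by blast
    have cU: "card (P \<union> Q) = s + 2" using card_Un_Int[OF finP] cP cQ cPQ by simp
    define R where "R = (P \<union> Q) - {r}"
    have RY: "R \<subseteq> Y" using P Q unfolding R_def by blast
    have cR: "card R = s + 1" unfolding R_def using cU r by (simp add: card_Diff_singleton)
    have cPr: "card (P - {r}) = s" using cP r by (simp add: card_Diff_singleton)
    have cQr: "card (Q - {r}) = s" using cQ r by (simp add: card_Diff_singleton)
    have e1: "P \<union> R = P \<union> Q" "P \<inter> R = P - {r}" using r unfolding R_def by auto
    have e2: "Q \<union> R = P \<union> Q" "Q \<inter> R = Q - {r}" using r unfolding R_def by auto
    have "D c (P \<union> R) + D c (P \<inter> R) = D c P + D c R"
      by (rule modular[OF c P RY]) (simp add: e1 gv cU cPr cP cR)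
    moreover have "D c (Q \<union> R) + D c (Q \<inter> R) = D c Q + D c R"
      by (rule modular[OF c Q RY]) (simp add: e2 gv cU cQr cQ cR)
    moreover have "D c (P - {r}) = 0" by (rule D0[OF c]) (use P cPr in auto)
    moreover have "D c (Q - {r}) = 0" by (rule D0[OF c]) (use Q cQr in auto)
    ultimately show ?thesis using e1 e2 by simp
  qed
  have john: "\<And>P Q. P \<subseteq> Y \<Longrightarrow> Q \<subseteq> Y \<Longrightarrow> card P = s + 1 \<Longrightarrow> card Q = s + 1 \<Longrightarrow> card (P - Q) = m \<Longrightarrow> D c P = D c Q"
    if c: "c \<in> J" for c m
  proof (induction m)
    case 0
    have finP: "finite P" "finite Q" using 0 finY finite_subset by auto
    then have "P \<subseteq> Q" using 0 by auto
    then have "P = Q" using card_subset_eq[of Q P] finP 0 by simp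
    then show ?case by simp
  next
    case (Suc m)
    have finP: "finite P" "finite Q" using Suc finY finite_subset by auto
    obtain p where p: "p \<in> P" "p \<notin> Q" using Suc.prems(5) by (metis Diff_iff card.empty ex_in_conv nat.distinct(1))
    have "card (Q - P) = card (P - Q)"
      using card_Diff_subset_Int[of Q P] card_Diff_subset_Int[of P Q] finP Suc.prems(3,4)
      by (simp add: Int_commute)
    then obtain q where q: "q \<in> Q" "q \<notin> P" using Suc.prems(5) by (metis Diff_iff card.empty ex_in_conv nat.distinct(1))
    define P' where "P' = insert q (P - {p})"
    have P'Y: "P' \<subseteq> Y" using Suc.prems p q unfolding P'_def by blast
    have cP': "card P' = s + 1" unfolding P'_def using finP p q Suc.prems(3) by (simp add: card_Diff_singleton)
    have "P \<inter> P' = P - {p}" unfolding P'_def using q by blast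
    then have cPP': "card (P \<inter> P') = s" using p Suc.prems(3) by (simp add: card_Diff_singleton)
    have "P' - Q = (P - Q) - {p}" unfolding P'_def using q by blast
    then have "card (P' - Q) = m" using p Suc.prems(5) by (simp add: card_Diff_singleton)
    then have "D c P' = D c Q" using Suc.IH[OF P'Y Suc.prems(2) cP' Suc.prems(4)] by blast
    moreover have "D c P = D c P'" using adj[OF c Suc.prems(1) P'Y Suc.prems(3) cP' cPP'] .
    ultimately show ?case by simp
  qed
  obtain P0 where P0: "P0 \<subseteq> Y" "card P0 = s + 1" using obtain_subset_with_card_n[of "s + 1" Y] sY by auto
  have "(\<Sum>j\<in>J. D j P0) = 1" using sumg[OF P0(1)] gv[of P0] P0 by simp
  then obtain ow where ow: "ow \<in> J" "0 < D ow P0"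
  proof -
    assume h: "\<And>ow. ow \<in> J \<Longrightarrow> 0 < D ow P0 \<Longrightarrow> thesis"
    show thesis
    proof (rule ccontr)
      assume "\<not> thesis"
      then have "\<forall>j\<in>J. D j P0 \<le> 0" using h by force
      then have "(\<Sum>j\<in>J. D j P0) \<le> 0" by (intro sum_nonpos) auto
      then show False using \<open>(\<Sum>j\<in>J. D j P0) = 1\<close> by simp
    qed
  qed
  have "D ow P0 \<le> 1" using Dle[OF ow(1) P0(1)] gv[of P0] P0 by simp
  then have DoP0: "D ow P0 = 1" using ow by simp
  have allP: "D ow P = 1" if "P \<subseteq> Y" "card P = s + 1" for P
    using john[OF ow(1) P0(1) that(1) P0(2) that(2) refl] DoP0 by simp
  have YNL: "Y \<subseteq> NL ow"
  proof
    fix x assume x: "x \<in> Y"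
    have "s \<le> card (Y - {x})" using sY x finY by (simp add: card_Diff_singleton)
    then obtain B where B: "B \<subseteq> Y - {x}" "card B = s" using obtain_subset_with_card_n by metis
    have finB: "finite B" using B finY finite_subset by blast
    have "x \<notin> B" using B by blast
    then have cP: "card (insert x B) = s + 1" using B finB by simp
    have PY: "insert x B \<subseteq> Y" using B x by blast
    show "x \<in> NL ow"
    proof (rule ccontr)
      assume "x \<notin> NL ow"
      then have "D ow (insert x B - {x}) = D ow (insert x B)" using D_loop[OF ow(1)] PY YE by blast
      moreover have "insert x B - {x} = B" using B by blast
      moreover have "D ow B = 0" using D0[OF ow(1)] B by auto
      ultimately show False using allP[OF PY cP] by simp
    qed
  qed
  have rankY: "N ow Y = int s"
  proof -
    obtain B where B: "B \<subseteq> Y" "card B = s" using obtain_subset_with_card_n[of s Y] sY by auto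
    have finB: "finite B" using B finY finite_subset by blast
    have "D ow B = 0" using D0[OF ow(1)] B by auto
    then have NB: "N ow B = int s" using B YNL unfolding D_def by (simp add: Int_absorb2)
    have step: "\<forall>x\<in>Y - B. N ow (insert x B) = N ow B"
    proof
      fix x assume x: "x \<in> Y - B"
      have cP: "card (insert x B) = s + 1" using B finB x by auto
      have PY: "insert x B \<subseteq> Y" using B x by blast
      have "D ow (insert x B) = 1" using allP[OF PY cP] .
      moreover have "insert x B \<inter> NL ow = insert x B" using PY YNL by blast
      ultimately have "N ow (insert x B) = int s" using cP unfolding D_def by simp
      then show "N ow (insert x B) = N ow B" using NB by simp
    qed
    have "N ow (B \<union> (Y - B)) = N ow B"
      using mr_closure_set[OF mat[OF ow(1)], of "Y - B" B] step finY B YE by auto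
    moreover have "B \<union> (Y - B) = Y" using B by blast
    ultimately show ?thesis using NB by simp
  qed
  have DoY: "D ow Y = g i Y" unfolding D_def using rankY YNL gv[of Y] sY by (simp add: Int_absorb2)
  have rest0: "(\<Sum>j\<in>J - {ow}. D j A) = g i A - D ow A" if "A \<subseteq> Y" for A
    using sumg[OF that] sum.remove[of J ow "\<lambda>j. D j A"] ow(1) by simp
  have oth: "\<forall>A\<subseteq>Y. D c A = 0" if c: "c \<in> J" "c \<noteq> ow" for c
  proof (intro allI impI)
    fix A assume A: "A \<subseteq> Y"
    have "(\<Sum>j\<in>J - {ow}. D j Y) = 0" using rest0[of Y] DoY by simp
    then have "D c Y = 0" using sum_nonneg_eq_0_iff[of "J - {ow}" "\<lambda>j. D j Y"] Dnn c by auto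
    then show "D c A = 0" using D_mono[OF c(1) A YE] Dnn[OF c(1) A] by simp
  qed
  have own: "\<forall>A\<subseteq>Y. D ow A = g i A"
  proof (intro allI impI)
    fix A assume A: "A \<subseteq> Y"
    have "(\<Sum>j\<in>J - {ow}. D j A) = 0" using oth A by (intro sum.neutral) auto
    then show "D ow A = g i A" using rest0[OF A] by simp
  qed
  show ?thesis using ow(1) YNL own oth unfolding Y_def by blast
qed

definition own :: "nat \<Rightarrow> nat" where
  "own i = (SOME ow. ow \<in> J \<and> X i \<subseteq> NL ow \<and> (\<forall>A\<subseteq>X i. D ow A = g i A) \<and> (\<forall>c\<in>J. c \<noteq> ow \<longrightarrow> (\<forall>A\<subseteq>X i. D c A = 0)))"

lemma own_spec:
  assumes "i \<in> I" "ns i"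
  shows "own i \<in> J \<and> X i \<subseteq> NL (own i) \<and> (\<forall>A\<subseteq>X i. D (own i) A = g i A) \<and> (\<forall>c\<in>J. c \<noteq> own i \<longrightarrow> (\<forall>A\<subseteq>X i. D c A = 0))"
proof -
  have "\<exists>ow. ow \<in> J \<and> X i \<subseteq> NL ow \<and> (\<forall>A\<subseteq>X i. D ow A = g i A) \<and> (\<forall>c\<in>J. c \<noteq> ow \<longrightarrow> (\<forall>A\<subseteq>X i. D c A = 0))"
    using owner_ex[OF assms] by blast
  then show ?thesis unfolding own_def by (rule someI_ex)
qed

lemma own_J: "i \<in> I \<Longrightarrow> ns i \<Longrightarrow> own i \<in> J" using own_spec by blast
lemma own_NL: "i \<in> I \<Longrightarrow> ns i \<Longrightarrow> X i \<subseteq> NL (own i)" using own_spec by blast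
lemma own_D: "i \<in> I \<Longrightarrow> ns i \<Longrightarrow> A \<subseteq> X i \<Longrightarrow> D (own i) A = g i A" using own_spec by blast
lemma nonown_D: "i \<in> I \<Longrightarrow> ns i \<Longrightarrow> c \<in> J \<Longrightarrow> c \<noteq> own i \<Longrightarrow> A \<subseteq> X i \<Longrightarrow> D c A = 0"
  using own_spec by blast

lemma own_N: assumes "i \<in> I" "ns i" "A \<subseteq> X i" shows "N (own i) A = int (min (card A) (t i))"
proof -
  have "A \<inter> NL (own i) = A" using own_NL[OF assms(1,2)] assms(3) by blast
  then show ?thesis using own_D[OF assms] unfolding D_def g_def by simp
qed

lemma nonown_N: assumes "i \<in> I" "ns i" "c \<in> J" "c \<noteq> own i" "A \<subseteq> X i"
  shows "N c A = int (card (A \<inter> NL c))"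
  using nonown_D[OF assms] unfolding D_def by simp

lemma circ_edge:
  assumes j: "j \<in> J" and c: "circ j C" and i: "i \<in> I" and C: "C \<subseteq> X i"
  shows "ns i \<and> j = own i"
proof -
  have "2 \<le> card C" using circ_props[OF j c] by blast
  moreover have "card C \<le> card (X i)" using C finX[OF i] by (intro card_mono)
  ultimately have nsi: "ns i" unfolding ns_def by linarith
  have "j = own i"
  proof (rule ccontr)
    assume "j \<noteq> own i"
    then have "D j C = 0" using nonown_D[OF i nsi j _ C] by blast
    then show False using c unfolding circ_def by simp
  qed
  then show ?thesis using nsi by blast
qed

end



context decomp begin

lemma ns_two: "i \<in> I \<Longrightarrow> x \<in> X i \<Longrightarrow> y \<in> X i \<Longrightarrow> x \<noteq> y \<Longrightarrow> ns i"
proof -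
  assume a: "i \<in> I" "x \<in> X i" "y \<in> X i" "x \<noteq> y"
  have "card {x, y} \<le> card (X i)" using a finX by (intro card_mono) auto
  then show "ns i" using a(4) unfolding ns_def by simp
qed

lemma cl_step:
  assumes j: "j \<in> J" and A: "A \<subseteq> E" and x: "x \<in> A" and S: "S \<subseteq> A - {x}"
    and eq: "N j (insert x S) = N j S"
  shows "N j A = N j (A - {x})"
proof -
  have "N j (insert x (A - {x})) = N j (A - {x})"
    using mr_closure_step[OF mat[OF j], of S "A - {x}" x] A x S eq by blast
  moreover have "insert x (A - {x}) = A" using x by blast
  ultimately show ?thesis by simp
qed

lemma three_sub:
  assumes j: "j \<in> J" and S: "S1 \<subseteq> E" "S2 \<subseteq> E" and N1: "N j S1 \<le> 2" and N2: "N j S2 \<le> 2"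
    and Z: "Z \<subseteq> S1 \<inter> S2" "2 \<le> N j Z" and T: "T \<subseteq> S1 \<union> S2"
  shows "N j T \<le> 2"
proof -
  have "N j (S1 \<union> S2) + N j (S1 \<inter> S2) \<le> N j S1 + N j S2" using N_submod[OF j S] .
  moreover have "N j Z \<le> N j (S1 \<inter> S2)" using Z S by (intro N_mono[OF j]) auto
  moreover have "N j T \<le> N j (S1 \<union> S2)" using T S by (intro N_mono[OF j]) auto
  ultimately show ?thesis using N1 N2 Z by linarith
qed

lemma free_N:
  assumes "i \<in> I" "ns i" "c \<in> J" "c \<noteq> own i" "B \<subseteq> X i" "B \<subseteq> NL c"
  shows "N c B = int (card B)"
proof -
  have "B \<inter> NL c = B" using assms by blast
  then show ?thesis using nonown_N[OF assms(1-5)] by simp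
qed

lemma dl_pos: assumes A: "A \<subseteq> E" and pos: "0 < dl A" shows "\<exists>i\<in>I. t i < card (A \<inter> X i)"
proof (rule ccontr)
  assume "\<not> ?thesis"
  then have "\<forall>i\<in>I. card (A \<inter> X i) \<le> t i" by force
  then have "dl A = 0" unfolding dl_def by (intro sum.neutral) auto
  then show False using pos by simp
qed

lemma other_elem: assumes "finite Z" "2 \<le> card Z" shows "\<exists>z\<in>Z. z \<noteq> ow"
proof (rule ccontr)
  assume "\<not> ?thesis"
  then have "Z \<subseteq> {ow}" by blast
  then have "card Z \<le> 1" using card_mono[of "{ow}" Z] by simp
  then show False using assms by simp
qed

lemma two_over:
  assumes "finite S" "i \<in> S" "i' \<in> S" "i \<noteq> i'" shows "2 \<le> card S"
proof -
  have "card {i, i'} \<le> card S" using assms by (intro card_mono) auto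
  then show ?thesis using assms by simp
qed

lemma tri_aux:
  assumes c': "c' \<in> J" and i1: "i1 \<in> I" "ns i1" and i2: "i2 \<in> I" "ns i2"
    and oo: "c' \<noteq> own i1" "c' \<noteq> own i2"
    and aNL: "a \<in> NL c'" and m: "a \<in> X i1" "u \<in> X i1" "a \<in> X i2" "c \<in> X i2"
    and d: "a \<noteq> u" "a \<noteq> c" "u \<noteq> c"
    and eq: "N c' {a, u, c} = N c' {u, c}"
  shows "u \<in> NL c' \<and> c \<in> NL c' \<and> N c' {u, c} = 2 \<and> N c' {a, u} = 2 \<and> N c' {a, c} = 2"
proof -
  have E3: "a \<in> E" "u \<in> E" "c \<in> E" using m XE i1 i2 by auto
  have Nuc: "N c' {u, c} \<le> N c' {u} + N c' {c}"
    using N_union_le[OF c', of "{u}" "{c}"] E3 by (simp add: insert_commute)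
  have Na: "N c' {a} = 1" using N_single[OF c' E3(1)] aNL by simp
  have Nmono: "N c' {a} \<le> N c' {a, u, c}" "N c' {a, u} \<le> N c' {a, u, c}" "N c' {a, c} \<le> N c' {a, u, c}"
    using E3 by (auto intro!: N_mono[OF c'])
  have uNL: "u \<in> NL c'"
  proof (rule ccontr)
    assume un: "u \<notin> NL c'"
    then have "N c' {u} = 0" using N_single[OF c' E3(2)] by simp
    show False
    proof (cases "c \<in> NL c'")
      case False
      then have "N c' {c} = 0" using N_single[OF c' E3(3)] by simp
      then show False using Nuc \<open>N c' {u} = 0\<close> Na Nmono eq by linarith
    next
      case True
      have "N c' {a, c} = 2" using free_N[OF i2 c' oo(2), of "{a, c}"] m aNL True d by simp
      moreover have "N c' {c} \<le> 1" using N_single[OF c' E3(3)] by simp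
      ultimately show False using Nuc \<open>N c' {u} = 0\<close> Nmono eq by linarith
    qed
  qed
  have cNL: "c \<in> NL c'"
  proof (rule ccontr)
    assume cn: "c \<notin> NL c'"
    then have "N c' {c} = 0" using N_single[OF c' E3(3)] by simp
    have "N c' {a, u} = 2" using free_N[OF i1 c' oo(1), of "{a, u}"] m aNL uNL d by simp
    moreover have "N c' {u} \<le> 1" using N_single[OF c' E3(2)] by simp
    ultimately show False using Nuc \<open>N c' {c} = 0\<close> Nmono eq by linarith
  qed
  have au: "N c' {a, u} = 2" using free_N[OF i1 c' oo(1), of "{a, u}"] m aNL uNL d by simp
  have ac: "N c' {a, c} = 2" using free_N[OF i2 c' oo(2), of "{a, c}"] m aNL cNL d by simp
  have "N c' {u, c} \<le> 2" using N_card[OF c', of "{u, c}"] E3 d by simp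
  then have "N c' {u, c} = 2" using au Nmono eq by linarith
  then show ?thesis using uNL cNL au ac by blast
qed

lemma triangle:
  assumes E3: "a \<in> E" "b \<in> E" "c \<in> E" and d: "a \<noteq> b" "a \<noteq> c" "b \<noteq> c"
    and ii: "i1 \<in> I" "i2 \<in> I" "i3 \<in> I"
    and mem: "a \<in> X i1" "b \<in> X i1" "a \<in> X i2" "c \<in> X i2" "b \<in> X i3" "c \<in> X i3"
    and nmem: "c \<notin> X i1" "b \<notin> X i2" "a \<notin> X i3"
    and tt: "t i1 = 1" "t i2 = 1" "t i3 = 1"
    and oo: "own i2 = own i1" "own i3 = own i1"
    and j: "j \<in> J" "j \<noteq> own i1" and jNL: "a \<in> NL j" "b \<in> NL j" "c \<in> NL j"
    and jN: "N j {a, b, c} \<le> 2"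
    and u: "u \<in> X i1" "u \<noteq> a" "u \<noteq> b"
  shows False
proof -
  have ns1: "ns i1" using ns_two[OF ii(1) mem(1,2) d(1)] .
  have ns2: "ns i2" using ns_two[OF ii(2) mem(3,4) d(2)] .
  have ns3: "ns i3" using ns_two[OF ii(3) mem(5,6) d(3)] .
  define ow where "ow = own i1"
  have owJ: "ow \<in> J" using own_J[OF ii(1) ns1] unfolding ow_def .
  have uE: "u \<in> E" using u XE ii by blast
  have uc: "u \<noteq> c" using u nmem by blast
  have NLo1: "X i1 \<subseteq> NL ow" using own_NL[OF ii(1) ns1] unfolding ow_def .
  have NLo2: "X i2 \<subseteq> NL ow" using own_NL[OF ii(2) ns2] oo unfolding ow_def by simp
  have par: "N ow {x, y} = 1" if "i \<in> {i1, i2, i3}" "x \<in> X i" "y \<in> X i" "x \<noteq> y" for i x y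
  proof -
    have iI: "i \<in> I" "ns i" "own i = ow" "t i = 1"
      using that ii ns1 ns2 ns3 oo tt unfolding ow_def by auto
    have "N (own i) {x, y} = int (min (card {x, y}) (t i))" using own_N[OF iI(1,2)] that by auto
    then show ?thesis using iI that by simp
  qed
  obtain i4 where i4: "i4 \<in> I" "u \<in> X i4" "c \<in> X i4"
  proof -
    have "N ow {u, a, c} + N ow ({u, a} \<inter> {a, c}) \<le> N ow {u, a} + N ow {a, c}"
      using N_submod[OF owJ, of "{u, a}" "{a, c}"] uE E3 by (simp add: insert_commute)
    moreover have "{u, a} \<inter> {a, c} = {a}" using uc d by auto
    moreover have "N ow {u, a} = 1" using par[of i1 u a] u mem by auto
    moreover have "N ow {a, c} = 1" using par[of i2 a c] mem d by auto
    moreover have "N ow {a} = 1" using N_single[OF owJ E3(1)] NLo1 mem by auto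
    moreover have "N ow {u, c} \<le> N ow {u, a, c}" using uE E3 by (intro N_mono[OF owJ]) auto
    ultimately have "N ow {u, c} \<le> 1" by simp
    moreover have "{u, c} \<inter> NL ow = {u, c}" using NLo1 NLo2 u mem by auto
    ultimately have "1 \<le> D ow {u, c}" unfolding D_def using uc by simp
    then have "0 < dl {u, c}" using D_le_dl[OF owJ, of "{u, c}"] uE E3 by simp
    then obtain i4 where i4: "i4 \<in> I" "t i4 < card ({u, c} \<inter> X i4)" using dl_pos[of "{u, c}"] uE E3 by auto
    have "1 \<le> t i4" using t_pos i4 by blast
    then have "2 \<le> card ({u, c} \<inter> X i4)" using i4 by linarith
    moreover have "card ({u, c} \<inter> X i4) \<le> card {u, c}" by (intro card_mono) auto
    ultimately have "card ({u, c} \<inter> X i4) = card {u, c}" using uc by simp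
    then have "{u, c} \<inter> X i4 = {u, c}" by (intro card_subset_eq) auto
    then show thesis using that i4 by blast
  qed
  obtain j5 where j5: "j5 \<in> J" "j5 \<noteq> ow" "a \<in> NL j5" "N j5 {a, u, c} = N j5 {u, c}"
  proof -
    let ?A = "{a, u, c}"
    have AE: "?A \<subseteq> E" using E3 uE by blast
    have m1: "i1 \<in> {i\<in>I. a \<in> X i \<and> t i < card (?A \<inter> X i)}"
    proof -
      have sub: "{a, u} \<subseteq> ?A \<inter> X i1" using mem u by blast
      have "card {a, u} \<le> card (?A \<inter> X i1)" using card_mono[OF _ sub] finX ii by blast
      moreover have "card {a, u} = 2" using d u uc by simp
      ultimately have "t i1 < card (?A \<inter> X i1)" using tt by linarith
      then show ?thesis using ii mem by blast
    qed
    have m2: "i2 \<in> {i\<in>I. a \<in> X i \<and> t i < card (?A \<inter> X i)}"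
    proof -
      have sub: "{a, c} \<subseteq> ?A \<inter> X i2" using mem u by blast
      have "card {a, c} \<le> card (?A \<inter> X i2)" using card_mono[OF _ sub] finX ii by blast
      moreover have "card {a, c} = 2" using d u uc by simp
      ultimately have "t i2 < card (?A \<inter> X i2)" using tt by linarith
      then show ?thesis using ii mem by blast
    qed
    have ne: "i1 \<noteq> i2" using mem nmem by blast
    have fin: "finite {i\<in>I. a \<in> X i \<and> t i < card (?A \<inter> X i)}" by simp
    have "2 \<le> card {i\<in>I. a \<in> X i \<and> t i < card (?A \<inter> X i)}"
      by (rule two_over[OF fin m1 m2 ne])
    moreover have "card {c\<in>J. a \<in> NL c \<and> N c ?A = N c (?A - {a})} = card {i\<in>I. a \<in> X i \<and> t i < card (?A \<inter> X i)}"
      by (rule L6[OF AE]) simp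
    ultimately have two: "2 \<le> card {c\<in>J. a \<in> NL c \<and> N c ?A = N c (?A - {a})}" by linarith
    have finZ: "finite {c\<in>J. a \<in> NL c \<and> N c ?A = N c (?A - {a})}"
      by (rule finite_subset[OF _ finite_atLeastAtMost[of 1 k]]) blast
    obtain c5 where c5: "c5 \<in> {c\<in>J. a \<in> NL c \<and> N c ?A = N c (?A - {a})}" "c5 \<noteq> ow"
      using other_elem[OF finZ two, of ow] by blast
    have "?A - {a} = {u, c}" using u d by auto
    then have "c5 \<in> J" "a \<in> NL c5" "N c5 ?A = N c5 {u, c}" using c5 by auto
    then show thesis using that c5(2) by blast
  qed
  obtain j6 where j6: "j6 \<in> J" "j6 \<noteq> ow" "b \<in> NL j6" "N j6 {b, u, c} = N j6 {u, c}"
  proof -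
    let ?A = "{b, u, c}"
    have AE: "?A \<subseteq> E" using E3 uE by blast
    have m1: "i1 \<in> {i\<in>I. b \<in> X i \<and> t i < card (?A \<inter> X i)}"
    proof -
      have sub: "{b, u} \<subseteq> ?A \<inter> X i1" using mem u by blast
      have "card {b, u} \<le> card (?A \<inter> X i1)" using card_mono[OF _ sub] finX ii by blast
      moreover have "card {b, u} = 2" using d u uc by simp
      ultimately have "t i1 < card (?A \<inter> X i1)" using tt by linarith
      then show ?thesis using ii mem by blast
    qed
    have m2: "i3 \<in> {i\<in>I. b \<in> X i \<and> t i < card (?A \<inter> X i)}"
    proof -
      have sub: "{b, c} \<subseteq> ?A \<inter> X i3" using mem u by blast
      have "card {b, c} \<le> card (?A \<inter> X i3)" using card_mono[OF _ sub] finX ii by blast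
      moreover have "card {b, c} = 2" using d u uc by simp
      ultimately have "t i3 < card (?A \<inter> X i3)" using tt by linarith
      then show ?thesis using ii mem by blast
    qed
    have ne: "i1 \<noteq> i3" using mem nmem by blast
    have fin: "finite {i\<in>I. b \<in> X i \<and> t i < card (?A \<inter> X i)}" by simp
    have "2 \<le> card {i\<in>I. b \<in> X i \<and> t i < card (?A \<inter> X i)}"
      by (rule two_over[OF fin m1 m2 ne])
    moreover have "card {c\<in>J. b \<in> NL c \<and> N c ?A = N c (?A - {b})} = card {i\<in>I. b \<in> X i \<and> t i < card (?A \<inter> X i)}"
      by (rule L6[OF AE]) simp
    ultimately have two: "2 \<le> card {c\<in>J. b \<in> NL c \<and> N c ?A = N c (?A - {b})}" by linarith
    have finZ: "finite {c\<in>J. b \<in> NL c \<and> N c ?A = N c (?A - {b})}"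
      by (rule finite_subset[OF _ finite_atLeastAtMost[of 1 k]]) blast
    obtain c6 where c6: "c6 \<in> {c\<in>J. b \<in> NL c \<and> N c ?A = N c (?A - {b})}" "c6 \<noteq> ow"
      using other_elem[OF finZ two, of ow] by blast
    have "?A - {b} = {u, c}" using u d by auto
    then have "c6 \<in> J" "b \<in> NL c6" "N c6 ?A = N c6 {u, c}" using c6 by auto
    then show thesis using that c6(2) by blast
  qed
  have ow3: "own i3 = ow" "own i2 = ow" using oo unfolding ow_def by auto
  have t5: "u \<in> NL j5 \<and> c \<in> NL j5 \<and> N j5 {u, c} = 2 \<and> N j5 {a, u} = 2 \<and> N j5 {a, c} = 2"
    by (rule tri_aux[OF j5(1) ii(1) ns1 ii(2) ns2 _ _ j5(3) mem(1) u(1) mem(3,4)])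
       (use j5 ow3 d u uc in \<open>auto simp: ow_def\<close>)
  have t6: "u \<in> NL j6 \<and> c \<in> NL j6 \<and> N j6 {u, c} = 2 \<and> N j6 {b, u} = 2 \<and> N j6 {b, c} = 2"
    by (rule tri_aux[OF j6(1) ii(1) ns1 ii(3) ns3 _ _ j6(3) mem(2) u(1) mem(5,6)])
       (use j6 ow3 d u uc in \<open>auto simp: ow_def\<close>)
  have jo: "j \<noteq> own i2" "j \<noteq> own i3" using j oo by auto
  have jab: "N j {a, b} = 2" using free_N[OF ii(1) ns1 j(1) j(2), of "{a, b}"] mem jNL d by simp
  have jac: "N j {a, c} = 2" using free_N[OF ii(2) ns2 j(1) jo(1), of "{a, c}"] mem jNL d by simp
  have jbc: "N j {b, c} = 2" using free_N[OF ii(3) ns3 j(1) jo(2), of "{b, c}"] mem jNL d by simp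
  have free3: "N c' {a, b, u} = 3" if "c' \<in> J" "c' \<noteq> ow" "a \<in> NL c'" "b \<in> NL c'" "u \<in> NL c'" for c'
    using free_N[OF ii(1) ns1 that(1), of "{a, b, u}"] that mem u d unfolding ow_def by auto
  have ne1: "j \<noteq> j5"
  proof
    assume "j = j5"
    have "N j {b, u, a} \<le> 2"
      by (rule three_sub[OF j(1), of "{a, b, c}" "{a, u, c}" "{a, c}"])
         (use E3 uE jN t5 j5 jac \<open>j = j5\<close> in auto)
    moreover have "{b, u, a} = {a, b, u}" by auto
    ultimately show False using free3[OF j(1)] j jNL t5 \<open>j = j5\<close> unfolding ow_def by simp
  qed
  have ne2: "j \<noteq> j6"
  proof
    assume "j = j6"
    have "N j {a, u, b} \<le> 2"
      by (rule three_sub[OF j(1), of "{a, b, c}" "{b, u, c}" "{b, c}"])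
         (use E3 uE jN t6 j6 jbc \<open>j = j6\<close> in auto)
    moreover have "{a, u, b} = {a, b, u}" by auto
    ultimately show False using free3[OF j(1)] j jNL t6 \<open>j = j6\<close> unfolding ow_def by simp
  qed
  have ne3: "j5 \<noteq> j6"
  proof
    assume "j5 = j6"
    have "N j5 {a, b, u} \<le> 2"
      by (rule three_sub[OF j5(1), of "{a, u, c}" "{b, u, c}" "{u, c}"])
         (use E3 uE t5 t6 j5 j6 \<open>j5 = j6\<close> in auto)
    then show False using free3[OF j5(1) j5(2) j5(3)] j6 t5 \<open>j5 = j6\<close> by simp
  qed
  let ?A = "{a, b, c, u}"
  have AE: "?A \<subseteq> E" using E3 uE by blast
  have cA: "c \<in> ?A" by blast
  let ?Z = "{c'\<in>J. c \<in> NL c' \<and> N c' ?A = N c' (?A - {c})}"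
  let ?O = "{i\<in>I. c \<in> X i \<and> t i < card (?A \<inter> X i)}"
  have Zsub: "{ow, j, j5, j6} \<subseteq> ?Z"
  proof -
    have "N ow ?A = N ow (?A - {c})"
    proof (rule cl_step[OF owJ AE cA, of "{a}"])
      show "{a} \<subseteq> ?A - {c}" using d by auto
      have "N ow {c, a} = 1" using par[of i2 c a] mem d by auto
      moreover have "N ow {a} = 1" using N_single[OF owJ E3(1)] NLo1 mem by auto
      ultimately show "N ow (insert c {a}) = N ow {a}" by simp
    qed
    moreover have "c \<in> NL ow" using NLo2 mem by blast
    moreover have "N j ?A = N j (?A - {c})"
    proof (rule cl_step[OF j(1) AE cA, of "{a, b}"])
      show "{a, b} \<subseteq> ?A - {c}" using d by auto
      have "N j {a, b} \<le> N j {c, a, b}" using E3 by (intro N_mono[OF j(1)]) auto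
      moreover have "{c, a, b} = {a, b, c}" by auto
      ultimately show "N j (insert c {a, b}) = N j {a, b}" using jN jab by simp
    qed
    moreover have "N j5 ?A = N j5 (?A - {c})"
    proof (rule cl_step[OF j5(1) AE cA, of "{a, u}"])
      show "{a, u} \<subseteq> ?A - {c}" using d uc by auto
      have "{c, a, u} = {a, u, c}" by auto
      then show "N j5 (insert c {a, u}) = N j5 {a, u}" using j5(4) t5 by simp
    qed
    moreover have "N j6 ?A = N j6 (?A - {c})"
    proof (rule cl_step[OF j6(1) AE cA, of "{b, u}"])
      show "{b, u} \<subseteq> ?A - {c}" using d uc by auto
      have "{c, b, u} = {b, u, c}" by auto
      then show "N j6 (insert c {b, u}) = N j6 {b, u}" using j6(4) t6 by simp
    qed
    ultimately have "ow \<in> ?Z" "j \<in> ?Z" "j5 \<in> ?Z" "j6 \<in> ?Z" using owJ j j5 j6 jNL t5 t6 by blast+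
    then show ?thesis by blast
  qed
  have "card {ow, j, j5, j6} = 4" using j(2) j5(2) j6(2) ne1 ne2 ne3 unfolding ow_def by auto
  moreover have finZ: "finite ?Z" by (rule finite_subset[OF _ finite_atLeastAtMost[of 1 k]]) blast
  ultimately have Z4: "4 \<le> card ?Z" using card_mono[OF finZ Zsub] by linarith
  have Osub: "?O \<subseteq> {i2, i3, i4}"
  proof
    fix p assume p: "p \<in> ?O"
    then have pI: "p \<in> I" "c \<in> X p" "t p < card (?A \<inter> X p)" by auto
    have "1 \<le> t p" using t_pos pI by blast
    then have c2: "2 \<le> card (?A \<inter> X p)" using pI by linarith
    obtain y where y: "y \<in> ?A \<inter> X p" "y \<noteq> c"
    proof (rule ccontr)
      assume "\<not> thesis"
      then have "?A \<inter> X p \<subseteq> {c}" using that by blast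
      then have "card (?A \<inter> X p) \<le> 1" using card_mono[of "{c}"] by fastforce
      then show False using c2 by simp
    qed
    have "y = a \<or> y = b \<or> y = u" using y by auto
    moreover have "y = a \<Longrightarrow> p = i2" using two_in[OF pI(1) ii(2), of c y] pI mem y by auto
    moreover have "y = b \<Longrightarrow> p = i3" using two_in[OF pI(1) ii(3), of c y] pI mem y by auto
    moreover have "y = u \<Longrightarrow> p = i4" using two_in[OF pI(1) i4(1), of c y] pI i4 y by auto
    ultimately show "p \<in> {i2, i3, i4}" by blast
  qed
  have "card ?O \<le> card {i2, i3, i4}" by (rule card_mono[OF _ Osub]) blast
  also have "\<dots> \<le> 3" by (simp add: card_insert_le_m1)
  finally have "card ?O \<le> 3" .
  moreover have "card ?Z = card ?O" by (rule L6[OF AE cA])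
  ultimately show False using Z4 by linarith
qed

end



context decomp begin

lemma finJ_sub: "finite {c\<in>J. P c}"
  by (rule finite_subset[OF _ finite_atLeastAtMost[of 1 k]]) blast

lemma finI_sub: "finite {i\<in>I. P i}"
  by (rule finite_subset[OF _ finite_atLeastAtMost[of 1 n]]) blast

lemma circ_in_edge:
  assumes "j \<in> J" "circ j C" shows "\<exists>i\<in>I. C \<subseteq> X i"
  using assms
proof (induction "card C" arbitrary: j C rule: less_induct)
  case less
  note j = less.prems(1) and cC = less.prems(2)
  have IH: "\<exists>q\<in>I. C' \<subseteq> X q \<and> ns q \<and> j' = own q" if h: "card C' < card C" "j' \<in> J" "circ j' C'" for j' C'
  proof -
    obtain q where "q \<in> I" "C' \<subseteq> X q" using less.hyps[OF h(1) h(2,3)] by blast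
    then show ?thesis using circ_edge[OF h(2,3)] by blast
  qed
  show ?case
  proof (rule ccontr)
    assume bad: "\<not> (\<exists>i\<in>I. C \<subseteq> X i)"
    have CE: "C \<subseteq> E" and finC: "finite C" and CNL: "C \<subseteq> NL j" and c2: "2 \<le> card C"
      and NC: "\<And>x. x \<in> C \<Longrightarrow> N j C = N j (C - {x})" and NCv: "N j C = int (card C) - 1"
      using circ_props[OF j cC] by auto
    have circmin: "\<And>B. B \<subset> C \<Longrightarrow> D j B = 0" using cC unfolding circ_def by blast
    have ovns: "ns i" if "i \<in> I" "t i < card (C \<inter> X i)" for i
    proof -
      have "card (C \<inter> X i) \<le> card (X i)" using finX that by (intro card_mono) auto
      then show ?thesis using t_pos[OF that(1)] that unfolding ns_def by linarith
    qed
    have F3: "own i \<noteq> j" if i: "i \<in> I" "t i < card (C \<inter> X i)" for i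
    proof
      assume oj: "own i = j"
      have nsi: "ns i" using ovns i .
      have "D j (C \<inter> X i) = g i (C \<inter> X i)" using own_D[OF i(1) nsi, of "C \<inter> X i"] oj by simp
      moreover have "0 < g i (C \<inter> X i)" unfolding g_def using i by simp
      ultimately have pos: "0 < D j (C \<inter> X i)" by simp
      have "C \<inter> X i \<noteq> C" using bad i by blast
      then have "C \<inter> X i \<subset> C" by blast
      then show False using circmin pos by simp
    qed
    have ownZ: "x \<in> NL (own i) \<and> N (own i) C = N (own i) (C - {x})"
      if i: "i \<in> I" "x \<in> X i" "x \<in> C" "t i < card (C \<inter> X i)" for i x
    proof -
      have nsi: "ns i" using ovns i(1,4) .
      define ow where "ow = own i"
      have owJ: "ow \<in> J" using own_J[OF i(1) nsi] unfolding ow_def .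
      have xNL: "x \<in> NL ow" using own_NL[OF i(1) nsi] i(2) unfolding ow_def by blast
      let ?Q = "C \<inter> X i"
      have xQ: "x \<in> ?Q" using i by blast
      have cQx: "card (?Q - {x}) = card ?Q - 1" using xQ by (rule card_Diff_singleton)
      have e1: "min (card (?Q - {x})) (t i) = t i" using cQx i(4) by simp
      have e2: "min (card ?Q) (t i) = t i" using i(4) by simp
      have "N ow (?Q - {x}) = int (min (card (?Q - {x})) (t i))"
        using own_N[OF i(1) nsi, of "?Q - {x}"] unfolding ow_def by blast
      moreover have "N ow ?Q = int (min (card ?Q) (t i))"
        using own_N[OF i(1) nsi, of ?Q] unfolding ow_def by blast
      moreover have "insert x (?Q - {x}) = ?Q" using xQ by blast
      ultimately have "N ow (insert x (?Q - {x})) = N ow (?Q - {x})" using e1 e2 by simp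
      then have "N ow C = N ow (C - {x})" using cl_step[OF owJ CE i(3), of "?Q - {x}"] by blast
      then show ?thesis using xNL unfolding ow_def by blast
    qed
    define OV where "OV x = {i\<in>I. x \<in> X i \<and> t i < card (C \<inter> X i)}" for x
    have finOV: "finite (OV x)" for x unfolding OV_def by (rule finI_sub)
    have OVD: "i \<in> I" "x \<in> X i" "t i < card (C \<inter> X i)" if "i \<in> OV x" for i x
      using that unfolding OV_def by blast+
    have claimA: "\<exists>i i'. i \<in> OV x \<and> i' \<in> OV x \<and> i \<noteq> i' \<and> own i = own i'" if x: "x \<in> C" for x
    proof (rule ccontr)
      assume "\<not> ?thesis"
      then have inj: "inj_on own (OV x)" unfolding inj_on_def by blast
      let ?Z = "{c\<in>J. x \<in> NL c \<and> N c C = N c (C - {x})}"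
      have finZ: "finite ?Z" by (rule finJ_sub)
      have sub: "insert j (own ` OV x) \<subseteq> ?Z"
      proof
        fix c assume "c \<in> insert j (own ` OV x)"
        then show "c \<in> ?Z"
        proof
          assume "c = j" then show ?thesis using j CNL x NC by blast
        next
          assume "c \<in> own ` OV x"
          then obtain i where i: "i \<in> OV x" "c = own i" by blast
          note ii = OVD[OF i(1)]
          have "own i \<in> J" using own_J[OF ii(1) ovns[OF ii(1) ii(3)]] .
          then show ?thesis using ownZ[OF ii(1,2) x ii(3)] i(2) by blast
        qed
      qed
      have notin: "j \<notin> own ` OV x"
      proof
        assume "j \<in> own ` OV x"
        then obtain i where i: "i \<in> OV x" "j = own i" by blast
        note ii = OVD[OF i(1)]
        show False using F3[OF ii(1) ii(3)] i(2) by simp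
      qed
      have "card (insert j (own ` OV x)) = card (OV x) + 1"
        using notin card_image[OF inj] finOV[of x] by simp
      moreover have "card (insert j (own ` OV x)) \<le> card ?Z" using card_mono[OF finZ sub] .
      moreover have "card ?Z = card (OV x)" unfolding OV_def by (rule L6[OF CE x])
      ultimately show False by linarith
    qed
    have claimB: "C = (C \<inter> X i) \<union> (C \<inter> X i')"
      if x: "x \<in> C" and ov: "i \<in> OV x" "i' \<in> OV x" and ne: "i \<noteq> i'" and oo: "own i = own i'" for x i i'
    proof -
      note ii = OVD[OF ov(1)] and ii' = OVD[OF ov(2)]
      define A where "A = (C \<inter> X i) \<union> (C \<inter> X i')"
      have AC: "A \<subseteq> C" unfolding A_def by blast
      have AE: "A \<subseteq> E" using AC CE by blast
      have xA: "x \<in> A" using x ii unfolding A_def by blast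
      let ?O = "{p\<in>I. x \<in> X p \<and> t p < card (A \<inter> X p)}"
      have m1: "i \<in> ?O"
      proof -
        have sub: "C \<inter> X i \<subseteq> A \<inter> X i" using ii ii' unfolding A_def by blast
        have "finite (A \<inter> X i)" using finC AC finite_subset[of "A \<inter> X i" C] by blast
        then have "card (C \<inter> X i) \<le> card (A \<inter> X i)" using card_mono[OF _ sub] by blast
        then have "t i < card (A \<inter> X i)" using ii by linarith
        then show ?thesis using ii by blast
      qed
      have m2: "i' \<in> ?O"
      proof -
        have sub: "C \<inter> X i' \<subseteq> A \<inter> X i'" using ii ii' unfolding A_def by blast
        have "finite (A \<inter> X i')" using finC AC finite_subset[of "A \<inter> X i'" C] by blast
        then have "card (C \<inter> X i') \<le> card (A \<inter> X i')" using card_mono[OF _ sub] by blast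
        then have "t i' < card (A \<inter> X i')" using ii' by linarith
        then show ?thesis using ii' by blast
      qed
      have finO: "finite ?O" by (rule finI_sub)
      have "2 \<le> card ?O" by (rule two_over[OF finO m1 m2 ne])
      moreover have "card {c\<in>J. x \<in> NL c \<and> N c A = N c (A - {x})} = card ?O" by (rule L6[OF AE xA])
      ultimately have two: "2 \<le> card {c\<in>J. x \<in> NL c \<and> N c A = N c (A - {x})}" by linarith
      obtain c4 where c4: "c4 \<in> {c\<in>J. x \<in> NL c \<and> N c A = N c (A - {x})}" "c4 \<noteq> own i"
        using other_elem[OF finJ_sub two, of "own i"] by blast
      have c4': "c4 \<in> J" "x \<in> NL c4" "N c4 A = N c4 (A - {x})" using c4(1) by blast+
      obtain C4 where C4: "circ c4 C4" "x \<in> C4" "C4 \<subseteq> A"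
        using circ_through[OF c4'(1) AE xA c4'(2) c4'(3)] by blast
      show ?thesis
      proof (cases "card C4 < card C")
        case True
        obtain q where q: "q \<in> I" "C4 \<subseteq> X q" "ns q" "c4 = own q" using IH[OF True c4'(1) C4(1)] by blast
        have "2 \<le> card C4" "finite C4" using circ_props[OF c4'(1) C4(1)] by blast+
        then obtain y where y: "y \<in> C4" "y \<noteq> x" using other_elem[of C4 x] by blast
        have "y \<in> X i \<or> y \<in> X i'" using y C4(3) unfolding A_def by blast
        moreover have xq: "x \<in> X q" "y \<in> X q" using q(2) C4(2) y(1) by blast+
        moreover have "y \<in> X i \<Longrightarrow> q = i" using two_in[OF q(1) ii(1) xq(1) ii(2) xq(2) _ y(2)[symmetric]] by blast
        moreover have "y \<in> X i' \<Longrightarrow> q = i'" using two_in[OF q(1) ii'(1) xq(1) ii'(2) xq(2) _ y(2)[symmetric]] by blast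
        ultimately have "c4 = own i" using q(4) oo by metis
        then show ?thesis using c4(2) by blast
      next
        case False
        have C4C: "C4 \<subseteq> C" using C4(3) AC by blast
        have "card C4 \<le> card C" using card_mono[OF finC C4C] .
        then have "card C4 = card C" using False by linarith
        then have "C4 = C" using card_subset_eq[OF finC C4C] by blast
        then have "C \<subseteq> A" using C4(3) by blast
        then show ?thesis using AC unfolding A_def by blast
      qed
    qed
    have claimD: "\<exists>y x'' p. C \<inter> X i' = {x, y} \<and> y \<noteq> x \<and> x'' \<in> C \<inter> X i \<and> x'' \<noteq> x \<and> p \<in> I \<and> p \<noteq> i \<and> p \<noteq> i'
        \<and> own p = own i \<and> t p = 1 \<and> C \<inter> X p = {x'', y} \<and> t i' = 1"
      if x: "x \<in> C" and ov: "i \<in> OV x" "i' \<in> OV x" and ne: "i \<noteq> i'" and oo: "own i = own i'" for x i i'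
    proof -
      note ii = OVD[OF ov(1)] and ii' = OVD[OF ov(2)]
      have CU: "C = (C \<inter> X i) \<union> (C \<inter> X i')" using claimB[OF x ov ne oo] .
      have meet: "X i \<inter> X i' = {x}" using meet_le1[OF ii(1) ii'(1) ne ii(2) ii'(2)] .
      have "2 \<le> card (C \<inter> X i)" using ii(3) t_pos[OF ii(1)] by linarith
      then obtain x'' where x'': "x'' \<in> C \<inter> X i" "x'' \<noteq> x" using other_elem[of "C \<inter> X i" x] finC by blast
      have x''C: "x'' \<in> C" using x'' by blast
      obtain p1 p2 where p: "p1 \<in> OV x''" "p2 \<in> OV x''" "p1 \<noteq> p2" "own p1 = own p2"
        using claimA[OF x''C] by blast
      note pp1 = OVD[OF p(1)] and pp2 = OVD[OF p(2)]
      have CP: "C = (C \<inter> X p1) \<union> (C \<inter> X p2)" using claimB[OF x''C p] .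
      have "p1 = i \<or> p2 = i"
      proof (rule ccontr)
        assume h: "\<not> (p1 = i \<or> p2 = i)"
        have m1: "X p1 \<inter> X i = {x''}" using meet_le1[OF pp1(1) ii(1) _ pp1(2)] h x'' by blast
        have m2: "X p2 \<inter> X i = {x''}" using meet_le1[OF pp2(1) ii(1) _ pp2(2)] h x'' by blast
        have "x \<in> X p1 \<or> x \<in> X p2" using CP x by blast
        then have "x = x''" using m1 m2 ii(2) by blast
        then show False using x'' by blast
      qed
      then obtain p where pI: "p \<in> OV x''" "p \<noteq> i" "own p = own i" "C = (C \<inter> X p) \<union> (C \<inter> X i)"
      proof
        assume "p1 = i"
        then show thesis using that[of p2] p CP by (simp add: Un_commute)
      next
        assume "p2 = i"
        then show thesis using that[of p1] p CP by simp
      qed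
      note pp = OVD[OF pI(1)]
      have pi': "p \<noteq> i'"
      proof
        assume "p = i'"
        then have "x'' \<in> X i \<inter> X i'" using pp x'' by blast
        then show False using meet x'' by blast
      qed
      have meetp: "X p \<inter> X i = {x''}" using meet_le1[OF pp(1) ii(1) pI(2) pp(2)] x'' by blast
      have "2 \<le> card (C \<inter> X i')" using ii'(3) t_pos[OF ii'(1)] by linarith
      then obtain y where y: "y \<in> C \<inter> X i'" "y \<noteq> x" using other_elem[of "C \<inter> X i'" x] finC by blast
      have yp: "y \<in> X p"
      proof -
        have "y \<in> (C \<inter> X p) \<union> (C \<inter> X i)" using pI(4) y by blast
        moreover have "y \<notin> X i" using meet y by blast
        ultimately show ?thesis by blast
      qed
      have meetp': "X p \<inter> X i' = {y}" using meet_le1[OF pp(1) ii'(1) pi' yp] y by blast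
      have Q': "C \<inter> X i' = {x, y}"
      proof
        show "C \<inter> X i' \<subseteq> {x, y}"
        proof
          fix z assume z: "z \<in> C \<inter> X i'"
          show "z \<in> {x, y}"
          proof (cases "z = x")
            case True then show ?thesis by blast
          next
            case False
            have "z \<in> (C \<inter> X p) \<union> (C \<inter> X i)" using pI(4) z by blast
            moreover have "z \<notin> X i" using meet z False by blast
            ultimately have "z \<in> X p" by blast
            then show ?thesis using meetp' z by blast
          qed
        qed
        show "{x, y} \<subseteq> C \<inter> X i'" using x ii' y by blast
      qed
      have ti': "t i' = 1" using ii'(3) Q' y t_pos[OF ii'(1)] by simp
      have x''y: "x'' \<noteq> y" using meet x'' y by blast
      have Cp: "C \<inter> X p = {x'', y}"
      proof -
        have sub: "C \<inter> X p \<subseteq> {x'', y}"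
        proof
          fix z assume z: "z \<in> C \<inter> X p"
          have "z \<in> C \<inter> X i \<or> z \<in> C \<inter> X i'" using CU z by blast
          then show "z \<in> {x'', y}"
          proof
            assume "z \<in> C \<inter> X i" then show ?thesis using meetp z by blast
          next
            assume "z \<in> C \<inter> X i'" then show ?thesis using meetp' z by blast
          qed
        qed
        have "2 \<le> card (C \<inter> X p)" using pp(3) t_pos[OF pp(1)] by linarith
        moreover have "card (C \<inter> X p) \<le> card {x'', y}" using sub by (intro card_mono) auto
        moreover have "card {x'', y} = 2" using x''y by simp
        ultimately have "card (C \<inter> X p) = card {x'', y}" by linarith
        then show ?thesis using card_subset_eq[OF _ sub] by simp
      qed
      have tp: "t p = 1" using pp(3) Cp x''y t_pos[OF pp(1)] by simp
      show ?thesis using Q' y x'' pp(1) pI(2) pi' pI(3) tp Cp ti' by blast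
    qed
    have "C \<noteq> {}" using c2 by auto
    then obtain x where x: "x \<in> C" by blast
    obtain i i' where ov: "i \<in> OV x" "i' \<in> OV x" "i \<noteq> i'" "own i = own i'" using claimA[OF x] by blast
    note ii = OVD[OF ov(1)] and ii' = OVD[OF ov(2)]
    obtain y x'' p where D1: "C \<inter> X i' = {x, y}" "y \<noteq> x" "x'' \<in> C \<inter> X i" "x'' \<noteq> x" "p \<in> I" "p \<noteq> i"
      "p \<noteq> i'" "own p = own i" "t p = 1" "C \<inter> X p = {x'', y}" "t i' = 1"
      using claimD[OF x ov] by blast
    obtain y2 where D2: "C \<inter> X i = {x, y2}" "t i = 1"
      using claimD[OF x ov(2) ov(1) ov(3)[symmetric] ov(4)[symmetric]] by blast
    have x''y2: "x'' = y2" using D1(3,4) D2(1) by blast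
    have C3: "C = {x, x'', y}" using claimB[OF x ov] D1(1) D2(1) x''y2 by auto
    have meet: "X i \<inter> X i' = {x}" using meet_le1[OF ii(1) ii'(1) ov(3) ii(2) ii'(2)] .
    have dist: "x \<noteq> x''" "x \<noteq> y" "x'' \<noteq> y" using D1 meet by auto
    have mem: "x \<in> X i" "x'' \<in> X i" "x \<in> X i'" "y \<in> X i'" "x'' \<in> X p" "y \<in> X p"
      using D1 D2 x''y2 by auto
    have nmem: "y \<notin> X i" "x'' \<notin> X i'" "x \<notin> X p"
    proof -
      show "y \<notin> X i" using bad C3 mem ii(1) by blast
      show "x'' \<notin> X i'" using bad C3 mem ii'(1) by blast
      show "x \<notin> X p" using bad C3 mem D1(5) by blast
    qed
    have E3: "x \<in> E" "x'' \<in> E" "y \<in> E" using C3 CE by auto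
    have jNL: "x \<in> NL j" "x'' \<in> NL j" "y \<in> NL j" using C3 CNL by auto
    have "card C = 3" using C3 dist by simp
    then have jN: "N j {x, x'', y} \<le> 2" using NCv C3 by simp
    have jo: "j \<noteq> own i" using F3[OF ii(1) ii(3)] by simp
    have tt: "t i = 1" "t i' = 1" "t p = 1" using D1 D2 by auto
    show False
    proof (cases "X i \<subseteq> {x, x''} \<and> X i' \<subseteq> {x, y} \<and> X p \<subseteq> {x'', y}")
      case True
      then have "X i = {x, x''}" "X i' = {x, y}" "X p = {x'', y}" using mem by auto
      then have "{x, x''} \<in> hyperedges n X" "{x, y} \<in> hyperedges n X" "{x'', y} \<in> hyperedges n X"
        using ii(1) ii'(1) D1(5) unfolding hyperedges_def by auto
      then show False using H3 E3 dist by blast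
    next
      case False
      then consider (c1) "\<not> X i \<subseteq> {x, x''}" | (c2) "\<not> X i' \<subseteq> {x, y}" | (c3) "\<not> X p \<subseteq> {x'', y}" by blast
      then show False
      proof cases
        case c1
        then obtain u where u: "u \<in> X i" "u \<noteq> x" "u \<noteq> x''" by blast
        show False
          by (rule triangle[OF E3(1) E3(2) E3(3) dist(1) dist(2) dist(3) ii(1) ii'(1) D1(5)
              mem(1) mem(2) mem(3) mem(4) mem(5) mem(6) nmem(1) nmem(2) nmem(3) tt(1) tt(2) tt(3)
              ov(4)[symmetric] D1(8) j jo jNL(1) jNL(2) jNL(3) jN u(1) u(2) u(3)])
      next
        case c2
        then obtain u where u: "u \<in> X i'" "u \<noteq> x" "u \<noteq> y" by blast
        have jN': "N j {x, y, x''} \<le> 2" using jN by (simp add: insert_commute)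
        have oo2: "own p = own i'" using D1(8) ov(4) by simp
        have jo': "j \<noteq> own i'" using jo ov(4) by simp
        show False
          by (rule triangle[OF E3(1) E3(3) E3(2) dist(2) dist(1) dist(3)[symmetric] ii'(1) ii(1) D1(5)
              mem(3) mem(4) mem(1) mem(2) mem(6) mem(5) nmem(2) nmem(1) nmem(3) tt(2) tt(1) tt(3)
              ov(4) oo2 j jo' jNL(1) jNL(3) jNL(2) jN' u(1) u(2) u(3)])
      next
        case c3
        then obtain u where u: "u \<in> X p" "u \<noteq> x''" "u \<noteq> y" by blast
        have jN': "N j {x'', y, x} \<le> 2" using jN by (simp add: insert_commute)
        have oo3: "own i' = own p" using D1(8) ov(4) by simp
        have jo'': "j \<noteq> own p" using jo D1(8) by simp
        show False
          by (rule triangle[OF E3(2) E3(3) E3(1) dist(3) dist(1)[symmetric] dist(2)[symmetric] D1(5) ii(1) ii'(1)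
              mem(5) mem(6) mem(2) mem(1) mem(4) mem(3) nmem(3) nmem(1) nmem(2) tt(3) tt(1) tt(2)
              D1(8)[symmetric] oo3 j jo'' jNL(2) jNL(3) jNL(1) jN' u(1) u(2) u(3)])
      qed
    qed
  qed
qed

end



context decomp begin

lemma owners_distinct:
  assumes i: "i \<in> I" "ns i" and i': "i' \<in> I" "ns i'" and ne: "i \<noteq> i'" and x: "x \<in> X i" "x \<in> X i'"
  shows "own i \<noteq> own i'"
proof
  assume oo: "own i = own i'"
  define A where "A = X i \<union> X i'"
  have AE: "A \<subseteq> E" using XE i i' unfolding A_def by blast
  have xA: "x \<in> A" using x unfolding A_def by blast
  let ?O = "{p\<in>I. x \<in> X p \<and> t p < card (A \<inter> X p)}"
  have m1: "i \<in> ?O"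
  proof -
    have "A \<inter> X i = X i" unfolding A_def by blast
    then show ?thesis using t_lt[OF i(1)] i x unfolding ns_def by simp
  qed
  have m2: "i' \<in> ?O"
  proof -
    have "A \<inter> X i' = X i'" unfolding A_def by blast
    then show ?thesis using t_lt[OF i'(1)] i' x unfolding ns_def by simp
  qed
  have "2 \<le> card ?O" by (rule two_over[OF finI_sub m1 m2 ne])
  moreover have "card {c\<in>J. x \<in> NL c \<and> N c A = N c (A - {x})} = card ?O" by (rule L6[OF AE xA])
  ultimately have two: "2 \<le> card {c\<in>J. x \<in> NL c \<and> N c A = N c (A - {x})}" by linarith
  obtain c4 where c4: "c4 \<in> {c\<in>J. x \<in> NL c \<and> N c A = N c (A - {x})}" "c4 \<noteq> own i"
    using other_elem[OF finJ_sub two, of "own i"] by blast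
  have c4': "c4 \<in> J" "x \<in> NL c4" "N c4 A = N c4 (A - {x})" using c4(1) by blast+
  obtain C4 where C4: "circ c4 C4" "x \<in> C4" "C4 \<subseteq> A"
    using circ_through[OF c4'(1) AE xA c4'(2) c4'(3)] by blast
  obtain q where q: "q \<in> I" "C4 \<subseteq> X q" using circ_in_edge[OF c4'(1) C4(1)] by blast
  have cq: "c4 = own q" using circ_edge[OF c4'(1) C4(1) q] by blast
  have "2 \<le> card C4" "finite C4" using circ_props[OF c4'(1) C4(1)] by blast+
  then obtain y where y: "y \<in> C4" "y \<noteq> x" using other_elem[of C4 x] by blast
  have xq: "x \<in> X q" "y \<in> X q" using q(2) C4(2) y(1) by blast+
  have "y \<in> X i \<or> y \<in> X i'" using y C4(3) unfolding A_def by blast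
  moreover have "y \<in> X i \<Longrightarrow> q = i" using two_in[OF q(1) i(1) xq(1) x(1) xq(2) _ y(2)[symmetric]] by blast
  moreover have "y \<in> X i' \<Longrightarrow> q = i'" using two_in[OF q(1) i'(1) xq(1) x(2) xq(2) _ y(2)[symmetric]] by blast
  ultimately have "c4 = own i" using cq oo by metis
  then show False using c4(2) by blast
qed

lemma sing:
  assumes i: "i \<in> I" and nn: "\<not> ns i"
  shows "X i = {the_elem (X i)}"
proof -
  have "card (X i) = 1" using cardX[OF i] nn unfolding ns_def by simp
  then obtain x where "X i = {x}" using card_1_singletonE by blast
  then show ?thesis by simp
qed

lemma sing_ex:
  assumes i: "i \<in> I" and nn: "\<not> ns i"
  shows "\<exists>c. c \<in> J \<and> the_elem (X i) \<in> NL c \<and> (\<forall>l\<in>I. ns l \<and> the_elem (X i) \<in> X l \<longrightarrow> own l \<noteq> c)"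
proof -
  define x where "x = the_elem (X i)"
  have Xi: "X i = {x}" using sing[OF i nn] unfolding x_def .
  have xE: "x \<in> E" using XE[OF i] Xi by blast
  let ?T = "{l\<in>I. x \<in> X l}"
  let ?T' = "{l\<in>I. ns l \<and> x \<in> X l}"
  let ?S = "{c\<in>J. x \<in> NL c}"
  have T': "?T' = ?T - {i}"
  proof
    show "?T' \<subseteq> ?T - {i}" using nn by blast
    show "?T - {i} \<subseteq> ?T'"
    proof
      fix l assume l: "l \<in> ?T - {i}"
      show "l \<in> ?T'"
      proof (rule ccontr)
        assume "l \<notin> ?T'"
        then have "\<not> ns l" using l by blast
        then have XL: "X l = {the_elem (X l)}" using sing l by blast
        have hx: "x \<in> X l" using l by blast
        have "x = the_elem (X l)" using hx XL by (metis singletonD)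
        then have "X l = {x}" using XL by simp
        then have "X l = X i" using Xi by simp
        then have "l = i" using injX l i unfolding inj_on_def by blast
        then show False using l by blast
      qed
    qed
  qed
  have iT: "i \<in> ?T" using i Xi by blast
  have cT: "card ?T = w x" unfolding w_def by simp
  have cT': "card ?T' = w x - 1" using T' iT cT finI_sub by (simp add: card_Diff_singleton)
  have "?T \<noteq> {}" using iT by blast
  then have "0 < card ?T" using finI_sub[of "\<lambda>l. x \<in> X l"] by (simp add: card_gt_0_iff)
  then have wpos: "1 \<le> w x" using cT by linarith
  have inj: "inj_on own ?T'"
  proof (rule inj_onI)
    fix l l' assume l: "l \<in> ?T'" and l': "l' \<in> ?T'" and eq: "own l = own l'"
    have h: "l \<in> I" "ns l" "x \<in> X l" "l' \<in> I" "ns l'" "x \<in> X l'" using l l' by blast+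
    show "l = l'"
    proof (rule ccontr)
      assume "l \<noteq> l'"
      then show False using owners_distinct[OF h(1,2) h(4,5) _ h(3) h(6)] eq by blast
    qed
  qed
  have sub: "own ` ?T' \<subseteq> ?S"
  proof
    fix c assume "c \<in> own ` ?T'"
    then obtain l where l: "l \<in> ?T'" "c = own l" by blast
    have h: "l \<in> I" "ns l" "x \<in> X l" using l by blast+
    have "own l \<in> J" using own_J[OF h(1,2)] .
    moreover have "x \<in> NL (own l)" using own_NL[OF h(1,2)] h(3) by blast
    ultimately show "c \<in> ?S" using l(2) by blast
  qed
  have "card (own ` ?T') = w x - 1" using card_image[OF inj] cT' by simp
  moreover have "card ?S = w x" using card_S[OF xE] .
  ultimately have lt: "card (own ` ?T') < card ?S" using wpos by linarith
  have "\<not> ?S \<subseteq> own ` ?T'"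
  proof
    assume h: "?S \<subseteq> own ` ?T'"
    have "card ?S \<le> card (own ` ?T')" by (rule card_mono[OF finite_imageI[OF finI_sub] h])
    then show False using lt by linarith
  qed
  then obtain c where c: "c \<in> ?S" "c \<notin> own ` ?T'" by blast
  have "\<forall>l\<in>I. ns l \<and> x \<in> X l \<longrightarrow> own l \<noteq> c" using c(2) by blast
  then show ?thesis using c(1) unfolding x_def by blast
qed

definition col :: "nat \<Rightarrow> nat" where
  "col i = (if ns i then own i else
     (SOME c. c \<in> J \<and> the_elem (X i) \<in> NL c \<and> (\<forall>l\<in>I. ns l \<and> the_elem (X i) \<in> X l \<longrightarrow> own l \<noteq> c)))"

lemma col_sing:
  assumes i: "i \<in> I" and nn: "\<not> ns i"
  shows "col i \<in> J \<and> the_elem (X i) \<in> NL (col i) \<and> (\<forall>l\<in>I. ns l \<and> the_elem (X i) \<in> X l \<longrightarrow> own l \<noteq> col i)"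
  using someI_ex[OF sing_ex[OF i nn]] nn unfolding col_def by simp

lemma col_J: assumes i: "i \<in> I" shows "col i \<in> J"
proof (cases "ns i")
  case True then show ?thesis using own_J[OF i True] unfolding col_def by simp
next
  case False then show ?thesis using col_sing[OF i False] by blast
qed

lemma col_NL: "i \<in> I \<Longrightarrow> X i \<subseteq> NL (col i)"
proof -
  assume i: "i \<in> I"
  show ?thesis
  proof (cases "ns i")
    case True then show ?thesis using own_NL[OF i] unfolding col_def by simp
  next
    case False
    have "the_elem (X i) \<in> NL (col i)" using col_sing[OF i False] by blast
    then show ?thesis using sing[OF i False] by (metis singletonD subsetI)
  qed
qed

lemma col_N: assumes i: "i \<in> I" shows "N (col i) (X i) \<le> int (t i)"
proof (cases "ns i")
  case True
  then have "N (col i) (X i) = int (min (card (X i)) (t i))" using own_N[OF i True] unfolding col_def by simp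
  then show ?thesis by simp
next
  case False
  have "X i = {the_elem (X i)}" using sing[OF i False] .
  then have "N (col i) (X i) \<le> int (card (X i))" using N_card[OF col_J[OF i]] XE[OF i] by blast
  moreover have "card (X i) = 1" using \<open>X i = {the_elem (X i)}\<close> by (metis is_singletonI is_singleton_altdef)
  moreover have "t i = 1" using t_single[OF i] False unfolding ns_def by simp
  ultimately show ?thesis by simp
qed

lemma col_inj:
  assumes l: "l \<in> I" "x \<in> X l" and l': "l' \<in> I" "x \<in> X l'" and ne: "l \<noteq> l'"
  shows "col l \<noteq> col l'"
proof (cases "ns l")
  case True
  show ?thesis
  proof (cases "ns l'")
    case True
    then show ?thesis using owners_distinct[OF l(1) \<open>ns l\<close> l'(1) True ne l(2) l'(2)] \<open>ns l\<close> unfolding col_def by simp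
  next
    case False
    have "the_elem (X l') = x" using sing[OF l'(1) False] l'(2) by (metis singletonD)
    then have "own l \<noteq> col l'" using col_sing[OF l'(1) False] l True by blast
    then show ?thesis using True unfolding col_def by simp
  qed
next
  case False
  show ?thesis
  proof (cases "ns l'")
    case True
    have "the_elem (X l) = x" using sing[OF l(1) False] l(2) by (metis singletonD)
    then have "own l' \<noteq> col l" using col_sing[OF l(1) False] l' True by blast
    then show ?thesis using True unfolding col_def by simp
  next
    case False': False
    have "X l = {x}" using sing[OF l(1) False] l(2) by (metis singletonD)
    moreover have "X l' = {x}" using sing[OF l'(1) False'] l'(2) by (metis singletonD)
    ultimately have "l = l'" using injX l l' unfolding inj_on_def by metis
    then show ?thesis using ne by blast
  qed
qed

lemma col_cover:
  assumes c: "c \<in> J" and x: "x \<in> NL c"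
  shows "\<exists>i\<in>I. x \<in> X i \<and> col i = c"
proof -
  have xE: "x \<in> E" using x NL_E by blast
  let ?T = "{l\<in>I. x \<in> X l}"
  let ?S = "{c\<in>J. x \<in> NL c}"
  have inj: "inj_on col ?T"
  proof (rule inj_onI)
    fix l l' assume l: "l \<in> ?T" and l': "l' \<in> ?T" and eq: "col l = col l'"
    have h: "l \<in> I" "x \<in> X l" "l' \<in> I" "x \<in> X l'" using l l' by blast+
    show "l = l'"
    proof (rule ccontr)
      assume "l \<noteq> l'"
      then show False using col_inj[OF h(1,2) h(3,4)] eq by blast
    qed
  qed
  have sub: "col ` ?T \<subseteq> ?S"
  proof
    fix c assume "c \<in> col ` ?T"
    then obtain l where l: "l \<in> ?T" "c = col l" by blast
    have h: "l \<in> I" "x \<in> X l" using l by blast+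
    have "col l \<in> J" using col_J[OF h(1)] .
    moreover have "x \<in> NL (col l)" using col_NL[OF h(1)] h(2) by blast
    ultimately show "c \<in> ?S" using l(2) by blast
  qed
  have "card (col ` ?T) = card ?S"
    using card_image[OF inj] card_S[OF xE] unfolding w_def by simp
  then have "col ` ?T = ?S" using card_subset_eq[OF finJ_sub sub] by blast
  then have "c \<in> col ` ?T" using c x by blast
  then show ?thesis by blast
qed

definition R :: "nat \<Rightarrow> 'a set \<Rightarrow> int" where
  "R c A = (\<Sum>i\<in>{i\<in>I. col i = c}. int (min (card (A \<inter> X i)) (t i)))"

lemma N_le_R: assumes c: "c \<in> J" and A: "A \<subseteq> E" shows "N c A \<le> R c A"
proof -
  let ?F = "{i\<in>I. col i = c}"
  have sub: "A \<inter> NL c \<subseteq> (\<Union>i\<in>?F. A \<inter> X i)" using col_cover[OF c] by blast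
  have "N c A = N c (A \<inter> NL c)" using N_NL[OF c A] .
  also have "\<dots> \<le> N c (\<Union>i\<in>?F. A \<inter> X i)"
  proof (rule N_mono[OF c sub])
    show "(\<Union>i\<in>?F. A \<inter> X i) \<subseteq> E" using A by blast
  qed
  also have "\<dots> \<le> (\<Sum>i\<in>?F. N c (A \<inter> X i))"
  proof (rule mr_UN_le[OF mat[OF c] finI_sub])
    show "\<forall>i\<in>?F. A \<inter> X i \<subseteq> E" using A by blast
  qed
  also have "\<dots> \<le> R c A" unfolding R_def
  proof (rule sum_mono)
    fix i assume i: "i \<in> ?F"
    have iI: "i \<in> I" and ci: "col i = c" using i by blast+
    have "N c (A \<inter> X i) \<le> int (card (A \<inter> X i))" using N_card[OF c] A by blast
    moreover have "N c (A \<inter> X i) \<le> N c (X i)" using XE[OF iI] by (intro N_mono[OF c]) auto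
    moreover have "N c (X i) \<le> int (t i)" using col_N[OF iI] ci by simp
    ultimately show "N c (A \<inter> X i) \<le> int (min (card (A \<inter> X i)) (t i))" by simp
  qed
  finally show ?thesis .
qed

lemma sum_R: "(\<Sum>c\<in>J. R c A) = rho A"
proof -
  have "(\<Sum>c\<in>J. R c A) = (\<Sum>c\<in>J. \<Sum>i\<in>{i. i \<in> I \<and> col i = c}. int (min (card (A \<inter> X i)) (t i)))"
    unfolding R_def by (rule refl)
  also have "\<dots> = (\<Sum>i\<in>I. int (min (card (A \<inter> X i)) (t i)))"
  proof (rule sum.group)
    show "finite I" by simp
    show "finite J" by simp
    show "col ` I \<subseteq> J" using col_J by blast
  qed
  finally show ?thesis unfolding rho_def .
qed

lemma N_eq_R: assumes c: "c \<in> J" and A: "A \<subseteq> E" shows "N c A = R c A"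
proof -
  have "(\<Sum>c\<in>J. N c A) = (\<Sum>c\<in>J. R c A)" using dec[OF A] sum_R by simp
  moreover have "\<And>c. c \<in> J \<Longrightarrow> N c A \<le> R c A" using N_le_R A by blast
  ultimately show ?thesis using sum_mono_inv[of "\<lambda>c. N c A" J "\<lambda>c. R c A" c] c by blast
qed

lemma col_proper:
  assumes i: "i \<in> I" and i': "i' \<in> I" and ne: "i \<noteq> i'" and x: "x \<in> X i" "x \<in> X i'"
  shows "col i \<noteq> col i'"
  using col_inj[OF i(1) x(1) i'(1) x(2) ne] .

end



lemma sum_shift1: "(\<Sum>j\<in>{1..k::nat}. f (j - 1)) = (\<Sum>i<k. (f i :: int))"
proof (induction k)
  case 0 then show ?case by simp
next
  case (Suc k)
  have "{1..Suc k} = insert (Suc k) {1..k}" by auto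
  then have "(\<Sum>j\<in>{1..Suc k}. f (j - 1)) = f k + (\<Sum>j\<in>{1..k}. f (j - 1))" by simp
  then show ?case using Suc by simp
qed

lemma sum_list_nth_J:
  fixes Ns :: "('a \<Rightarrow> int) list"
  assumes "length Ns = k"
  shows "(\<Sum>N\<leftarrow>Ns. N A) = (\<Sum>j\<in>{1..k}. (Ns ! (j - 1)) A)"
proof -
  have "(\<Sum>N\<leftarrow>Ns. N A) = (\<Sum>i = 0..<length (map (\<lambda>N. N A) Ns). map (\<lambda>N. N A) Ns ! i)"
    by (rule sum_list_sum_nth)
  also have "\<dots> = (\<Sum>i<k. (Ns ! i) A)" using assms by (simp add: atLeast0LessThan)
  also have "\<dots> = (\<Sum>j\<in>{1..k}. (Ns ! (j - 1)) A)" by (rule sum_shift1[of "\<lambda>i. (Ns ! i) A" k, symmetric])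
  finally show ?thesis .
qed

lemma min_submod:
  fixes a b u v tt :: nat
  assumes "a + b = u + v" "v \<le> a" "v \<le> b"
  shows "min u tt + min v tt \<le> min a tt + min b tt"
  using assms by (auto simp: min_def)

context hyp begin

definition Rc :: "(nat \<Rightarrow> nat) \<Rightarrow> nat \<Rightarrow> 'a set \<Rightarrow> int" where
  "Rc c j A = (if A \<subseteq> E then (\<Sum>i\<in>{i\<in>I. c i = j}. int (min (card (A \<inter> X i)) (t i))) else 0)"

definition Fm :: "nat \<Rightarrow> (nat \<Rightarrow> nat) \<Rightarrow> ('a set \<Rightarrow> int) list" where
  "Fm k c = map (Rc c) [1..<k+1]"

lemma finI_sub': "finite {i\<in>I. P i}"
  by (rule finite_subset[OF _ finite_atLeastAtMost[of 1 n]]) blast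

lemma proper_disj:
  assumes c: "c \<in> proper_colorings n X k" and i: "i \<in> I" "i' \<in> I" "i \<noteq> i'" and eq: "c i = c i'"
  shows "X i \<inter> X i' = {}"
proof (rule ccontr)
  assume "X i \<inter> X i' \<noteq> {}"
  then have "line_adj X i i'" unfolding line_adj_def using i by blast
  then have "c i \<noteq> c i'" using c i unfolding proper_colorings_def by blast
  then show False using eq by blast
qed

lemma Rc_matroid:
  assumes c: "c \<in> proper_colorings n X k"
  shows "matroid_rank E (Rc c j)"
proof -
  let ?F = "{i\<in>I. c i = j}"
  have disj: "X i \<inter> X i' = {}" if "i \<in> ?F" "i' \<in> ?F" "i \<noteq> i'" for i i'
    using proper_disj[OF c] that by blast
  have finF: "finite ?F" by (rule finI_sub')
  define f where "f A = (\<Sum>i\<in>?F. int (min (card (A \<inter> X i)) (t i)))" for A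
  have Rf: "Rc c j A = (if A \<subseteq> E then f A else 0)" for A unfolding Rc_def f_def by simp
  have nn: "0 \<le> f A" for A unfolding f_def by (intro sum_nonneg) simp
  have cd: "f A \<le> int (card A)" if A: "A \<subseteq> E" for A
  proof -
    have "f A \<le> (\<Sum>i\<in>?F. int (card (A \<inter> X i)))" unfolding f_def by (intro sum_mono) simp
    also have "\<dots> = int (\<Sum>i\<in>?F. card (A \<inter> X i))" by simp
    also have "(\<Sum>i\<in>?F. card (A \<inter> X i)) = card (\<Union>i\<in>?F. A \<inter> X i)"
    proof (rule card_UN_disjoint[symmetric])
      show "finite ?F" by (rule finF)
      show "\<forall>i\<in>?F. finite (A \<inter> X i)" using finX by blast
      show "\<forall>i\<in>?F. \<forall>i'\<in>?F. i \<noteq> i' \<longrightarrow> A \<inter> X i \<inter> (A \<inter> X i') = {}" using disj by blast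
    qed
    also have "card (\<Union>i\<in>?F. A \<inter> X i) \<le> card A"
      using A finE finite_subset by (intro card_mono) auto
    finally show ?thesis by simp
  qed
  have mono: "f A \<le> f B" if "A \<subseteq> B" "B \<subseteq> E" for A B
    unfolding f_def
  proof (rule sum_mono)
    fix i assume i: "i \<in> ?F"
    have "card (A \<inter> X i) \<le> card (B \<inter> X i)" using that finX i by (intro card_mono) auto
    then show "int (min (card (A \<inter> X i)) (t i)) \<le> int (min (card (B \<inter> X i)) (t i))" by simp
  qed
  have sub: "f (A \<union> B) + f (A \<inter> B) \<le> f A + f B" if "A \<subseteq> E" "B \<subseteq> E" for A B
  proof -
    have "f (A \<union> B) + f (A \<inter> B) = (\<Sum>i\<in>?F. int (min (card ((A \<union> B) \<inter> X i)) (t i)) + int (min (card ((A \<inter> B) \<inter> X i)) (t i)))"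
      unfolding f_def by (simp add: sum.distrib)
    also have "\<dots> \<le> (\<Sum>i\<in>?F. int (min (card (A \<inter> X i)) (t i)) + int (min (card (B \<inter> X i)) (t i)))"
    proof (rule sum_mono)
      fix i assume i: "i \<in> ?F"
      have fin: "finite (A \<inter> X i)" "finite (B \<inter> X i)" using finX i by auto
      have "card (A \<inter> X i) + card (B \<inter> X i) = card ((A \<inter> X i) \<union> (B \<inter> X i)) + card ((A \<inter> X i) \<inter> (B \<inter> X i))"
        using card_Un_Int[OF fin] .
      moreover have "(A \<inter> X i) \<union> (B \<inter> X i) = (A \<union> B) \<inter> X i" "(A \<inter> X i) \<inter> (B \<inter> X i) = (A \<inter> B) \<inter> X i" by blast+
      ultimately have e: "card (A \<inter> X i) + card (B \<inter> X i) = card ((A \<union> B) \<inter> X i) + card ((A \<inter> B) \<inter> X i)" by simp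
      have l1: "card ((A \<inter> B) \<inter> X i) \<le> card (A \<inter> X i)" using fin by (intro card_mono) auto
      have l2: "card ((A \<inter> B) \<inter> X i) \<le> card (B \<inter> X i)" using fin by (intro card_mono) auto
      have "min (card ((A \<union> B) \<inter> X i)) (t i) + min (card ((A \<inter> B) \<inter> X i)) (t i)
          \<le> min (card (A \<inter> X i)) (t i) + min (card (B \<inter> X i)) (t i)"
        by (rule min_submod[OF e l1 l2])
      then show "int (min (card ((A \<union> B) \<inter> X i)) (t i)) + int (min (card ((A \<inter> B) \<inter> X i)) (t i))
          \<le> int (min (card (A \<inter> X i)) (t i)) + int (min (card (B \<inter> X i)) (t i))" by linarith
    qed
    also have "\<dots> = f A + f B" unfolding f_def by (simp add: sum.distrib)
    finally show ?thesis .
  qed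
  show ?thesis unfolding matroid_rank_def
  proof (intro conjI allI impI)
    fix A assume A: "A \<subseteq> E"
    show "0 \<le> Rc c j A" using nn A Rf by simp
    show "Rc c j A \<le> int (card A)" using cd A Rf by simp
  next
    fix A B assume "A \<subseteq> B \<and> B \<subseteq> E"
    then show "Rc c j A \<le> Rc c j B" using mono Rf by auto
  next
    fix A B assume AB: "A \<subseteq> E \<and> B \<subseteq> E"
    then have "A \<union> B \<subseteq> E" "A \<inter> B \<subseteq> E" by auto
    then show "Rc c j (A \<union> B) + Rc c j (A \<inter> B) \<le> Rc c j A + Rc c j B" using sub AB Rf by simp
  next
    fix A assume "\<not> A \<subseteq> E"
    then show "Rc c j A = 0" using Rf by simp
  qed
qed

lemma Fm_nth: assumes "j < k" shows "Fm k c ! j = Rc c (j + 1)"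
proof -
  have "j < length [1..<k+1]" using assms by simp
  then have "Fm k c ! j = Rc c ([1..<k+1] ! j)" unfolding Fm_def by (rule nth_map)
  moreover have "[1..<k+1] ! j = 1 + j" using assms by (intro nth_upt) simp
  ultimately show ?thesis by simp
qed

lemma Fm_len: "length (Fm k c) = k" unfolding Fm_def by simp

lemma Fm_sum:
  assumes c: "c \<in> proper_colorings n X k" and A: "A \<subseteq> E"
  shows "(\<Sum>N\<leftarrow>Fm k c. N A) = rho A"
proof -
  have "(\<Sum>N\<leftarrow>Fm k c. N A) = (\<Sum>j\<in>{1..k}. (Fm k c ! (j - 1)) A)" by (rule sum_list_nth_J[OF Fm_len])
  also have "\<dots> = (\<Sum>j\<in>{1..k}. Rc c j A)"
  proof (rule sum.cong)
    fix j assume "j \<in> {1..k}"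
    then have "j - 1 < k" "j - 1 + 1 = j" by auto
    then show "(Fm k c ! (j - 1)) A = Rc c j A" using Fm_nth by metis
  qed simp
  also have "\<dots> = (\<Sum>j\<in>{1..k}. \<Sum>i\<in>{i. i \<in> I \<and> c i = j}. int (min (card (A \<inter> X i)) (t i)))"
    unfolding Rc_def using A by simp
  also have "\<dots> = (\<Sum>i\<in>I. int (min (card (A \<inter> X i)) (t i)))"
  proof (rule sum.group)
    show "finite I" by simp
    show "finite {1..k}" by simp
    show "c ` I \<subseteq> {1..k}" using c unfolding proper_colorings_def by (auto simp: PiE_def Pi_def)
  qed
  finally show ?thesis unfolding rho_def .
qed

lemma Fm_Delta:
  assumes c: "c \<in> proper_colorings n X k" and rho_eq: "\<forall>A. A \<subseteq> E \<longrightarrow> \<rho> A = rho A"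
  shows "Fm k c \<in> Delta E \<rho> k"
  unfolding Delta_def
proof (intro CollectI conjI ballI allI impI)
  show "length (Fm k c) = k" by (rule Fm_len)
  fix N assume "N \<in> set (Fm k c)"
  then show "matroid_rank E N" using Rc_matroid[OF c] unfolding Fm_def by auto
next
  fix A assume A: "A \<subseteq> E"
  show "\<rho> A = (\<Sum>N\<leftarrow>Fm k c. N A)" using Fm_sum[OF c A] rho_eq A by simp
qed


lemma key_inj:
  assumes c: "c \<in> proper_colorings n X k" and c': "c' \<in> proper_colorings n X k"
    and eq: "\<forall>j\<in>{1..k}. Rc c j = Rc c' j" and i: "i \<in> I" and ne: "c i \<noteq> c' i"
  shows "card (X i) = 1 \<and> (\<exists>l\<in>I. l \<noteq> i \<and> c' l = c i \<and> X i \<subseteq> X l)"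
proof -
  define j where "j = c i"
  have jk: "j \<in> {1..k}" using c i unfolding proper_colorings_def j_def by (auto simp: PiE_def Pi_def)
  let ?Fc = "{l\<in>I. c l = j}"
  let ?Fc' = "{l\<in>I. c' l = j}"
  have iFc: "i \<in> ?Fc" using i unfolding j_def by blast
  have iFc': "i \<notin> ?Fc'" using ne unfolding j_def by auto
  have XiE: "X i \<subseteq> E" using XE[OF i] .
  have cover: "\<exists>l\<in>?Fc'. e \<in> X l" if e: "e \<in> X i" for e
  proof (rule ccontr)
    assume no: "\<not> ?thesis"
    have eE: "{e} \<subseteq> E" using e XiE by blast
    have "int (min (card ({e} \<inter> X i)) (t i)) \<le> (\<Sum>l\<in>?Fc. int (min (card ({e} \<inter> X l)) (t l)))"
      by (rule member_le_sum[OF iFc]) (auto simp: finI_sub')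
    moreover have "int (min (card ({e} \<inter> X i)) (t i)) = 1" using e t_pos[OF i] by simp
    ultimately have "1 \<le> Rc c j {e}" unfolding Rc_def using eE by simp
    moreover have "Rc c' j {e} = 0"
    proof -
      have "\<forall>l\<in>?Fc'. int (min (card ({e} \<inter> X l)) (t l)) = 0" using no by auto
      then show ?thesis unfolding Rc_def using eE by simp
    qed
    ultimately show False using eq jk by simp
  qed
  have vc: "Rc c j (X i) = int (t i)"
  proof -
    have "Rc c j (X i) = (\<Sum>l\<in>?Fc. int (min (card (X i \<inter> X l)) (t l)))" unfolding Rc_def using XiE by simp
    also have "\<dots> = int (min (card (X i \<inter> X i)) (t i)) + (\<Sum>l\<in>?Fc - {i}. int (min (card (X i \<inter> X l)) (t l)))"
      by (rule sum.remove[OF finI_sub' iFc])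
    also have "(\<Sum>l\<in>?Fc - {i}. int (min (card (X i \<inter> X l)) (t l))) = 0"
    proof (rule sum.neutral, rule ballI)
      fix l assume l: "l \<in> ?Fc - {i}"
      have "X i \<inter> X l = {}" by (rule proper_disj[OF c i]) (use l iFc in auto)
      then show "int (min (card (X i \<inter> X l)) (t l)) = 0" by simp
    qed
    moreover have "t i \<le> card (X i)" using t_le i by blast
    ultimately show ?thesis by (simp add: min_def)
  qed
  have vc': "Rc c' j (X i) = int (card (X i))"
  proof -
    have "Rc c' j (X i) = (\<Sum>l\<in>?Fc'. int (min (card (X i \<inter> X l)) (t l)))" unfolding Rc_def using XiE by simp
    also have "\<dots> = (\<Sum>l\<in>?Fc'. int (card (X i \<inter> X l)))"
    proof (rule sum.cong[OF refl])
      fix l assume l: "l \<in> ?Fc'"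
      then have lI: "l \<in> I" "l \<noteq> i" using iFc' by auto
      have "card (X i \<inter> X l) \<le> 1" using H2' i lI by metis
      then show "int (min (card (X i \<inter> X l)) (t l)) = int (card (X i \<inter> X l))" using t_pos[OF lI(1)] by simp
    qed
    also have "\<dots> = int (\<Sum>l\<in>?Fc'. card (X i \<inter> X l))" by simp
    also have "(\<Sum>l\<in>?Fc'. card (X i \<inter> X l)) = card (\<Union>l\<in>?Fc'. X i \<inter> X l)"
    proof (rule card_UN_disjoint[symmetric])
      show "finite ?Fc'" by (rule finI_sub')
      show "\<forall>l\<in>?Fc'. finite (X i \<inter> X l)" using finX[OF i] by blast
      show "\<forall>l\<in>?Fc'. \<forall>l'\<in>?Fc'. l \<noteq> l' \<longrightarrow> X i \<inter> X l \<inter> (X i \<inter> X l') = {}"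
      proof (intro ballI impI)
        fix l l' assume l: "l \<in> ?Fc'" "l' \<in> ?Fc'" "l \<noteq> l'"
        have "X l \<inter> X l' = {}" by (rule proper_disj[OF c']) (use l in auto)
        then show "X i \<inter> X l \<inter> (X i \<inter> X l') = {}" by blast
      qed
    qed
    also have "(\<Union>l\<in>?Fc'. X i \<inter> X l) = X i" using cover by blast
    finally show ?thesis .
  qed
  have "t i = card (X i)" using vc vc' eq jk by simp
  then have "\<not> 2 \<le> card (X i)" using t_lt[OF i] by fastforce
  then have c1: "card (X i) = 1" using cardX[OF i] by simp
  then obtain e where Xi: "X i = {e}" using card_1_singletonE by blast
  obtain l where l: "l \<in> ?Fc'" "e \<in> X l" using cover[of e] Xi by blast
  have "l \<noteq> i" using l iFc' by blast
  moreover have "X i \<subseteq> X l" using Xi l(2) by simp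
  moreover have "l \<in> I" "c' l = c i" using l(1) unfolding j_def by auto
  ultimately show ?thesis using c1 by blast
qed

lemma Fm_inj:
  assumes c: "c \<in> proper_colorings n X k" and c': "c' \<in> proper_colorings n X k" and eqF: "Fm k c = Fm k c'"
  shows "c = c'"
proof -
  have eq: "\<forall>j\<in>{1..k}. Rc c j = Rc c' j"
  proof
    fix j assume j: "j \<in> {1..k}"
    then have "j - 1 < k" "j - 1 + 1 = j" by auto
    then show "Rc c j = Rc c' j" using Fm_nth[of "j - 1" k c] Fm_nth[of "j - 1" k c'] eqF by metis
  qed
  have eq': "\<forall>j\<in>{1..k}. Rc c' j = Rc c j" using eq by simp
  show ?thesis
  proof (rule ext, rule ccontr)
    fix i assume ne: "c i \<noteq> c' i"
    have ci: "c \<in> extensional I" "c' \<in> extensional I" using c c' unfolding proper_colorings_def PiE_def by auto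
    have i: "i \<in> I"
    proof (rule ccontr)
      assume "i \<notin> I"
      then have "c i = undefined" "c' i = undefined" using ci unfolding extensional_def by auto
      then show False using ne by simp
    qed
    obtain l where l: "l \<in> I" "l \<noteq> i" "c' l = c i" "X i \<subseteq> X l" and c1: "card (X i) = 1"
      using key_inj[OF c c' eq i ne] by blast
    have "X i \<inter> X l \<noteq> {}" using l(4) Xne[OF i] by blast
    then have "line_adj X i l" unfolding line_adj_def using l(2) by blast
    then have "c i \<noteq> c l" using c i l(1) unfolding proper_colorings_def by blast
    then have "c' l \<noteq> c l" using l(3) by simp
    then have "card (X l) = 1" using key_inj[OF c' c eq' l(1)] by blast
    then have "X i = X l" using c1 l(4) finX[OF l(1)] by (metis card_subset_eq)
    then have "i = l" using injX i l(1) unfolding inj_on_def by blast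
    then show False using l(2) by simp
  qed
qed

lemma Delta_surj:
  assumes Ns: "Ns \<in> Delta E \<rho> k" and rho_eq: "\<forall>A. A \<subseteq> E \<longrightarrow> \<rho> A = rho A"
  shows "\<exists>c\<in>proper_colorings n X k. Fm k c = Ns"
proof -
  define NN where "NN j = Ns ! (j - 1)" for j
  have len: "length Ns = k" and mats: "\<forall>N\<in>set Ns. matroid_rank E N"
    and sums: "\<forall>A. A \<subseteq> E \<longrightarrow> \<rho> A = (\<Sum>N\<leftarrow>Ns. N A)" using Ns unfolding Delta_def by auto
  have mat: "matroid_rank E (NN j)" if "j \<in> {1..k}" for j
  proof -
    have "j - 1 < length Ns" using that len by auto
    then show ?thesis using mats nth_mem unfolding NN_def by blast
  qed
  have dec: "rho A = (\<Sum>j\<in>{1..k}. NN j A)" if A: "A \<subseteq> E" for A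
    using rho_eq sums sum_list_nth_J[OF len, of A] A unfolding NN_def by simp
  have "decomp E n X t k NN" unfolding decomp_def decomp_axioms_def using hyp_axioms mat dec by blast
  then interpret d: decomp E n X t k NN .
  define c where "c i = (if i \<in> I then d.col i else undefined)" for i
  have cP: "c \<in> proper_colorings n X k"
    unfolding proper_colorings_def
  proof (intro CollectI conjI ballI impI)
    show "c \<in> {1..n} \<rightarrow>\<^sub>E {1..k}" unfolding c_def using d.col_J by (auto simp: PiE_def Pi_def extensional_def)
  next
    fix i j assume i: "i \<in> {1..n}" and j: "j \<in> {1..n}" and adj: "line_adj X i j"
    then have "i \<noteq> j" "X i \<inter> X j \<noteq> {}" unfolding line_adj_def by auto
    then obtain x where "x \<in> X i" "x \<in> X j" by blast
    then have "d.col i \<noteq> d.col j" using d.col_proper[OF i j \<open>i \<noteq> j\<close>] by blast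
    then show "c i \<noteq> c j" using i j unfolding c_def by simp
  qed
  have "Fm k c = Ns"
  proof (rule nth_equalityI)
    show "length (Fm k c) = length Ns" using Fm_len len by simp
    fix idx assume "idx < length (Fm k c)"
    then have idx: "idx < k" using Fm_len by simp
    have "Rc c (idx + 1) = NN (idx + 1)"
    proof
      fix A
      show "Rc c (idx + 1) A = NN (idx + 1) A"
      proof (cases "A \<subseteq> E")
        case True
        have "{i\<in>I. c i = idx + 1} = {i\<in>I. d.col i = idx + 1}" unfolding c_def by auto
        then have "Rc c (idx + 1) A = d.R (idx + 1) A" unfolding Rc_def d.R_def using True by simp
        also have "\<dots> = NN (idx + 1) A" using d.N_eq_R[of "idx + 1" A] idx True by simp
        finally show ?thesis .
      next
        case False
        have "NN (idx + 1) A = 0" using mr_out[OF mat[of "idx + 1"]] idx False by simp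
        then show ?thesis unfolding Rc_def using False by simp
      qed
    qed
    then show "Fm k c ! idx = Ns ! idx" using Fm_nth[OF idx] unfolding NN_def by simp
  qed
  then show ?thesis using cP by blast
qed

end

theorem theorem2p7:
  fixes E :: "'a set" and n :: nat and X :: "nat \<Rightarrow> 'a set" and t :: "nat \<Rightarrow> nat"
    and \<rho> :: "'a set \<Rightarrow> int"
  assumes hyp: "hypergraph E n X"
    and t_le: "\<forall>i\<in>{1..n}. t i \<le> card (X i)"
    and H2: "\<forall>i\<in>{1..n}. \<forall>j\<in>{1..n}. i \<noteq> j \<longrightarrow> card (X i \<inter> X j) \<le> 1"
    and H3: "\<not> (\<exists>a\<in>E. \<exists>b\<in>E. \<exists>c\<in>E. a \<noteq> b \<and> a \<noteq> c \<and> b \<noteq> c \<and>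
               {a, b} \<in> hyperedges n X \<and> {a, c} \<in> hyperedges n X \<and> {b, c} \<in> hyperedges n X)"
    and T: "\<forall>i\<in>{1..n}. t i = 1 \<or>
               (Min (hweight n X ` X i) \<le> t i \<and> t i < card (X i))"
    and rho: "\<forall>A. A \<subseteq> E \<longrightarrow> \<rho> A = (\<Sum>i=1..n. int (min (card (A \<inter> X i)) (t i)))"
  shows "(\<forall>k>0. \<exists>f. bij_betw f (proper_colorings n X k) (Delta E \<rho> k))
       \<and> (n \<ge> 1 \<longrightarrow> (LEAST k. 0 < k \<and> decomposable E k \<rho>) = chromatic_number n X)
       \<and> (\<forall>k>0. card (Delta E \<rho> k) = chromatic_poly n X k)"
proof -
  have Hh: "hyp E n X t" unfolding hyp_def using hyp t_le H2 H3 T by blast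
  interpret h: hyp E n X t by (rule Hh)
  have rho_eq: "\<forall>A. A \<subseteq> E \<longrightarrow> \<rho> A = h.rho A" using rho unfolding h.rho_def by simp
  have bij: "bij_betw (h.Fm k) (proper_colorings n X k) (Delta E \<rho> k)" for k
  proof (rule bij_betw_imageI)
    show "inj_on (h.Fm k) (proper_colorings n X k)"
      unfolding inj_on_def using h.Fm_inj by blast
    show "h.Fm k ` proper_colorings n X k = Delta E \<rho> k"
    proof
      show "h.Fm k ` proper_colorings n X k \<subseteq> Delta E \<rho> k" using h.Fm_Delta[OF _ rho_eq] by blast
      show "Delta E \<rho> k \<subseteq> h.Fm k ` proper_colorings n X k"
      proof
        fix Ns assume "Ns \<in> Delta E \<rho> k"
        then obtain c where "c \<in> proper_colorings n X k" "h.Fm k c = Ns" using h.Delta_surj[OF _ rho_eq] by blast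
        then show "Ns \<in> h.Fm k ` proper_colorings n X k" by blast
      qed
    qed
  qed
  have P1: "\<forall>k>0. \<exists>f. bij_betw f (proper_colorings n X k) (Delta E \<rho> k)" using bij by blast
  have P3: "\<forall>k>0. card (Delta E \<rho> k) = chromatic_poly n X k"
    using bij bij_betw_same_card unfolding chromatic_poly_def by metis
  have P2: "(LEAST k. 0 < k \<and> decomposable E k \<rho>) = chromatic_number n X" if n1: "n \<ge> 1"
  proof -
    have eqv: "(0 < k \<and> decomposable E k \<rho>) = (proper_colorings n X k \<noteq> {})" for k
    proof (cases "k = 0")
      case True
      have "proper_colorings n X k = {}"
      proof (rule ccontr)
        assume "proper_colorings n X k \<noteq> {}"
        then obtain c where "c \<in> proper_colorings n X k" by blast
        then have "c 1 \<in> {1..k}" using n1 unfolding proper_colorings_def by (auto simp: PiE_def Pi_def)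
        then show False using True by simp
      qed
      then show ?thesis using True by simp
    next
      case False
      have "(Delta E \<rho> k = {}) = (proper_colorings n X k = {})"
        using bij[of k] unfolding bij_betw_def by blast
      then show ?thesis using False unfolding decomposable_def by simp
    qed
    show ?thesis unfolding chromatic_number_def by (simp only: eqv)
  qed
  show ?thesis using P1 P2 P3 by blast
qed



end
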